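(* Fix $m\ge1$ and $i_1,\dots,i_m\in\{1,\dots,n\}$. For every integer $k\ge0$ and $r\in\{0,1\}$, $$\operatorname{ad}(X)^{2k+r}\big([x^m;i_1,\dots,i_m]\big)=(-1)^k\,k!\,\Big(\tfrac{\sqrt{-1}}{\sqrt2}\Big)^r\sum_{t=0}^{k}[\eta^tx^{m-k-t-r}\gamma^r\partial^{k-t};i_1,\dotsc,i_m],$$ where $[x^m;i_1,\dots,i_m]=x^{i_1}\cdots x^{i_m}$.
   Context: Fix $n\ge1$ and an invertible complex matrix $\eta=(\eta^{ij})$ with $\eta^{ij}=\eta^{ji}$. $W(2n|n)$ is the associative superalgebra generated by even $x^1,\dots,x^n,\partial_1,\dots,\partial_n$ and odd $\gamma^1,\dots,\gamma^n$ with relations $x^ix^j=x^jx^i$, $\partial_i\partial_j=\partial_j\partial_i$, $\partial_ix^j-x^j\partial_i=\delta_i^j$, $\gamma^i$ commuting with all $x^j,\partial_j$, $\gamma^i\gamma^j+\gamma^j\gamma^i=2\eta^{ij}$; $\partial^i:=\eta^{ij}\partial_j$ (summed). $X=\frac{\sqrt{-1}}{\sqrt2}\gamma^i\partial_i$, $\operatorname{ad}(X)(b)=Xb-(-1)^{|b|}bX$. Bracket symbol: for integers $a,p,q,t$ with $a,q,t\ge0$ and $2a+p+q+t=m$, and indices $i_1,\dots,i_m$, if $p<0$ the symbol $[\eta^ax^p\gamma^q\partial^t;i_1,\dots,i_m]$ is $0$; otherwise, for $\sigma\in S_m$ put $T_\sigma:=\prod_{l=0}^{a-1}\eta^{i_{\sigma(2l+1)}i_{\sigma(2l+2)}}\cdot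 x^{i_{\sigma(2a+1)}}\cdots x^{i_{\sigma(2a+p)}}\cdot\gamma^{i_{\sigma(2a+p+1)}}\cdots\gamma^{i_{\sigma(2a+p+q)}}\cdot\partial^{i_{\sigma(2a+p+q+1)}}\cdots\partial^{i_{\sigma(m)}}$ and $[\eta^ax^p\gamma^q\partial^t;i_1,\dots,i_m]:=\frac1{2^aa!p!t!}\sum_{\sigma\in S_m}T_\sigma$ (factors with exponent $0$ omitted). *)

theory Defs
  imports Complex_Main "HOL-Library.Function_Algebras" "HOL-Combinatorics.Permutations"
begin

text \<open>Free associative algebra on the generators x^i, partial_i, gamma^i, realised as
  complex-valued functions on words (noncommutative polynomials); W(2n|n) ids its
  quotient by the two-sided ideal generated by the defining relations.\<close>

datatype gen = GX nat | GD nat | GG nat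

type_synonym fa = "gen list \<Rightarrow> complex"

definition mono :: "gen list \<Rightarrow> fa" where
  "mono w = (\<lambda>u. if u = w then 1 else 0)"

definition fmul :: "fa \<Rightarrow> fa \<Rightarrow> fa" where
  "fmul f g = (\<lambda>w. \<Sum>i\<le>length w. f (take i w) * g (drop i w))"

definition fscale :: "complex \<Rightarrow> fa \<Rightarrow> fa" where
  "fscale c f = (\<lambda>w. c * f w)"

fun fprod :: "fa list \<Rightarrow> fa" where
  "fprod [] = mono []"
| "fprod (e # es) = fmul e (fprod es)"

definition isG :: "gen \<Rightarrow> bool" where
  "isG g = (case g of GG _ \<Rightarrow> True | _ \<Rightarrow> False)"

text \<open>Parity (grading) automorphism: b_even - b_odd.\<close>
definition psign :: "fa \<Rightarrow> fa" where
  "psign f = (\<lambda>w. (-1) ^ length (filter isG w) * f w)"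

definition relators :: "nat \<Rightarrow> (nat \<Rightarrow> nat \<Rightarrow> complex) \<Rightarrow> fa set" where
  "relators n eta =
     {mono [GX i, GX j] - mono [GX j, GX i] | i j. i \<in> {1..n} \<and> j \<in> {1..n}}
   \<union> {mono [GD i, GD j] - mono [GD j, GD i] | i j. i \<in> {1..n} \<and> j \<in> {1..n}}
   \<union> {mono [GD i, GX j] - mono [GX j, GD i] - (if i = j then mono [] else 0)
        | i j. i \<in> {1..n} \<and> j \<in> {1..n}}
   \<union> {mono [GG i, GX j] - mono [GX j, GG i] | i j. i \<in> {1..n} \<and> j \<in> {1..n}}
   \<union> {mono [GG i, GD j] - mono [GD j, GG i] | i j. i \<in> {1..n} \<and> j \<in> {1..n}}
   \<union> {mono [GG i, GG j] + mono [GG j, GG i] - fscale (2 * eta i j) (mono [])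
        | i j. i \<in> {1..n} \<and> j \<in> {1..n}}"

inductive_set Wideal :: "nat \<Rightarrow> (nat \<Rightarrow> nat \<Rightarrow> complex) \<Rightarrow> fa set"
  for n eta where
  zero: "0 \<in> Wideal n eta"
| gen: "r \<in> relators n eta \<Longrightarrow> fmul (mono u) (fmul r (mono v)) \<in> Wideal n eta"
| add: "a \<in> Wideal n eta \<Longrightarrow> b \<in> Wideal n eta \<Longrightarrow> a + b \<in> Wideal n eta"
| scale: "a \<in> Wideal n eta \<Longrightarrow> fscale c a \<in> Wideal n eta"

definition Weq :: "nat \<Rightarrow> (nat \<Rightarrow> nat \<Rightarrow> complex) \<Rightarrow> fa \<Rightarrow> fa \<Rightarrow> bool" where
  "Weq n eta a b \<longleftrightarrow> a - b \<in> Wideal n eta"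

definition cX :: complex where "cX = \<i> / complex_of_real (sqrt 2)"

definition Xel :: "nat \<Rightarrow> fa" where
  "Xel n = fscale cX (\<Sum>i\<in>{1..n}. mono [GG i, GD i])"

definition adX :: "nat \<Rightarrow> fa \<Rightarrow> fa" where
  "adX n b = fmul (Xel n) b - fmul (psign b) (Xel n)"

definition dup :: "nat \<Rightarrow> (nat \<Rightarrow> nat \<Rightarrow> complex) \<Rightarrow> nat \<Rightarrow> fa" where
  "dup n eta i = (\<Sum>j\<in>{1..n}. fscale (eta i j) (mono [GD j]))"

text \<open>Bracket symbol [eta^a x^p gamma^q partial^t; ids], positions 0-based, m = length ids.\<close>
definition bracket :: "nat \<Rightarrow> (nat \<Rightarrow> nat \<Rightarrow> complex) \<Rightarrow> nat \<Rightarrow> int \<Rightarrow> nat \<Rightarrow> nat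
     \<Rightarrow> nat list \<Rightarrow> fa" where
  "bracket n eta a p q t ids =
     (if p < 0 then 0 else
      (let m = length ids; pp = nat p in
       fscale (1 / (2 ^ a * fact a * fact pp * fact t))
         (\<Sum>\<sigma>\<in>{\<sigma>. \<sigma> permutes {..<m}}.
            fscale (\<Prod>l<a. eta (ids ! \<sigma> (2*l)) (ids ! \<sigma> (2*l+1)))
              (fprod (map (\<lambda>l. mono [GX (ids ! \<sigma> l)]) [2*a..<2*a+pp]
                    @ map (\<lambda>l. mono [GG (ids ! \<sigma> l)]) [2*a+pp..<2*a+pp+q]
                    @ map (\<lambda>l. dup n eta (ids ! \<sigma> l)) [2*a+pp+q..<m])))))"

end

theory Submission
  imports Defs
begin


lemma fmul_add_left: "fmul (f + g) h = fmul f h + fmul g h"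
  by (auto simp: fmul_def fun_eq_iff algebra_simps sum.distrib)
lemma fmul_add_right: "fmul h (f + g) = fmul h f + fmul h g"
  by (auto simp: fmul_def fun_eq_iff algebra_simps sum.distrib)
lemma fmul_diff_left: "fmul (f - g) h = fmul f h - fmul g h"
  by (auto simp: fmul_def fun_eq_iff algebra_simps sum_subtractf)
lemma fmul_diff_right: "fmul h (f - g) = fmul h f - fmul h g"
  by (auto simp: fmul_def fun_eq_iff algebra_simps sum_subtractf)
lemma fmul_zero_left[simp]: "fmul 0 h = 0"
  by (auto simp: fmul_def fun_eq_iff)
lemma fmul_zero_right[simp]: "fmul h 0 = 0"
  by (auto simp: fmul_def fun_eq_iff)
lemma fmul_scale_left: "fmul (fscale c f) h = fscale c (fmul f h)"
  by (auto simp: fmul_def fscale_def fun_eq_iff algebra_simps sum_distrib_left)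
lemma fmul_scale_right: "fmul h (fscale c f) = fscale c (fmul h f)"
  by (auto simp: fmul_def fscale_def fun_eq_iff algebra_simps sum_distrib_left)
lemma lin_sum:
  assumes "\<And>a b. L (a + b) = L a + L b" "L 0 = 0"
  shows "L (\<Sum>i\<in>I. f i) = (\<Sum>i\<in>I. L (f i))"
proof (induction I rule: infinite_finite_induct)
  case (infinite A)
  then show ?case by (subst sum.infinite, assumption)+ (rule assms(2))
next
  case empty
  then show ?case using assms(2) by simp
next
  case (insert x F)
  then show ?case using assms(1) by simp
qed

lemma fmul_sum_left: "fmul (\<Sum>i\<in>I. f i) h = (\<Sum>i\<in>I. fmul (f i) h)"
  by (rule lin_sum[where L="\<lambda>a. fmul a h"]) (simp_all add: fmul_add_left)
lemma fmul_sum_right: "fmul h (\<Sum>i\<in>I. f i) = (\<Sum>i\<in>I. fmul h (f i))"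
  by (rule lin_sum[where L="\<lambda>a. fmul h a"]) (simp_all add: fmul_add_right)

lemma fscale_add: "fscale c (f + g) = fscale c f + fscale c g"
  by (auto simp: fscale_def fun_eq_iff algebra_simps)
lemma fscale_diff: "fscale c (f - g) = fscale c f - fscale c g"
  by (auto simp: fscale_def fun_eq_iff algebra_simps)
lemma fscale_zero[simp]: "fscale c 0 = 0" "fscale 0 f = 0"
  by (auto simp: fscale_def fun_eq_iff)
lemma fscale_one[simp]: "fscale 1 f = f"
  by (auto simp: fscale_def fun_eq_iff)
lemma fscale_fscale[simp]: "fscale c (fscale d f) = fscale (c*d) f"
  by (auto simp: fscale_def fun_eq_iff)
lemma fscale_sum: "fscale c (\<Sum>i\<in>I. f i) = (\<Sum>i\<in>I. fscale c (f i))"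
  by (rule lin_sum[where L="\<lambda>a. fscale c a"]) (simp_all add: fscale_add)
lemma fscale_add_left: "fscale (c + d) f = fscale c f + fscale d f"
  by (auto simp: fscale_def fun_eq_iff algebra_simps)
lemma fscale_minus1: "fscale (-1) f = - f"
  by (auto simp: fscale_def fun_eq_iff)

lemma fmul_mono_mono: "fmul (mono u) (mono v) = mono (u @ v)"
proof (rule ext)
  fix w
  show "fmul (mono u) (mono v) w = mono (u @ v) w"
  proof (cases "w = u @ v")
    case True
    have "(\<Sum>i\<le>length w. mono u (take i w) * mono v (drop i w))
          = (\<Sum>i\<in>{length u}. mono u (take i w) * mono v (drop i w))"
    proof (rule sum.mono_neutral_right)
      show "\<forall>i\<in>{..length w} - {length u}. mono u (take i w) * mono v (drop i w) = 0"
      proof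
        fix i assume i: "i \<in> {..length w} - {length u}"
        then have "length (take i w) \<noteq> length u" by auto
        then show "mono u (take i w) * mono v (drop i w) = 0" by (auto simp: mono_def)
      qed
    qed (auto simp: True)
    then show ?thesis by (simp add: fmul_def True mono_def)
  next
    case False
    have "mono u (take i w) * mono v (drop i w) = 0" for i
      using False by (auto simp: mono_def)
    then show ?thesis using False by (simp add: fmul_def mono_def del: mult_eq_0_iff)
  qed
qed

lemma fmul_one_left[simp]: "fmul (mono []) f = f"
proof (rule ext)
  fix w
  have "(\<Sum>i\<le>length w. mono [] (take i w) * f (drop i w)) = (\<Sum>i\<in>{0}. mono [] (take i w) * f (drop i w))"
    by (rule sum.mono_neutral_right) (auto simp: mono_def)
  then show "fmul (mono []) f w = f w" by (simp add: fmul_def mono_def)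
qed

lemma fmul_one_right[simp]: "fmul f (mono []) = f"
proof (rule ext)
  fix w
  have "(\<Sum>i\<le>length w. f (take i w) * mono [] (drop i w)) = (\<Sum>i\<in>{length w}. f (take i w) * mono [] (drop i w))"
    by (rule sum.mono_neutral_right) (auto simp: mono_def)
  then show "fmul f (mono []) w = f w" by (simp add: fmul_def mono_def)
qed

lemma fmul_assoc: "fmul (fmul f g) h = fmul f (fmul g h)"
  for f g h :: fa
proof (rule ext)
  fix w :: "gen list"
  let ?N = "length w"
  have "fmul (fmul f g) h w = (\<Sum>i\<le>?N. \<Sum>j\<le>i. f (take j w) * g (take (i-j) (drop j w)) * h (drop i w))"
    by (auto simp: fmul_def sum_distrib_right min_def take_drop intro!: sum.cong)
  also have "\<dots> = (\<Sum>(j,l)\<in>{(j,l). j + l \<le> ?N}. f (take j w) * g (take l (drop j w)) * h (drop (j+l) w))"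
    by (subst sum.triangle_reindex_eq) (auto intro!: sum.cong)
  also have "\<dots> = (\<Sum>j\<le>?N. \<Sum>l\<le>?N-j. f (take j w) * g (take l (drop j w)) * h (drop (j+l) w))"
  proof -
    have "{(j,l). j + l \<le> ?N} = Sigma {..?N} (\<lambda>j. {..?N-j})" by auto
    then show ?thesis by (simp add: sum.Sigma)
  qed
  also have "\<dots> = fmul f (fmul g h) w"
    by (auto simp: fmul_def sum_distrib_left mult.assoc add.commute intro!: sum.cong)
  finally show "fmul (fmul f g) h w = fmul f (fmul g h) w" .
qed

lemma fprod_append: "fprod (xs @ ys) = fmul (fprod xs) (fprod ys)"
  by (induction xs) (auto simp: fmul_assoc)


definition fs :: "fa \<Rightarrow> bool" where "fs f \<longleftrightarrow> finite {w. f w \<noteq> 0}"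

lemma fs_zero[simp]: "fs 0" by (simp add: fs_def)
lemma fs_mono[simp]: "fs (mono w)" by (simp add: fs_def mono_def)
lemma fs_add[simp]: "fs f \<Longrightarrow> fs g \<Longrightarrow> fs (f + g)"
  unfolding fs_def by (rule finite_subset[of _ "{w. f w \<noteq> 0} \<union> {w. g w \<noteq> 0}"]) auto
lemma fs_uminus[simp]: "fs f \<Longrightarrow> fs (- f)"
  unfolding fs_def by simp
lemma fs_diff[simp]: "fs f \<Longrightarrow> fs g \<Longrightarrow> fs (f - g)"
  unfolding fs_def by (rule finite_subset[of _ "{w. f w \<noteq> 0} \<union> {w. g w \<noteq> 0}"]) auto
lemma fs_scale[simp]: "fs f \<Longrightarrow> fs (fscale c f)"
  unfolding fs_def fscale_def by (rule finite_subset[of _ "{w. f w \<noteq> 0}"]) auto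
lemma fs_sum[simp]: "(\<And>i. i \<in> I \<Longrightarrow> fs (f i)) \<Longrightarrow> fs (\<Sum>i\<in>I. f i)"
proof (induction I rule: infinite_finite_induct)
  case (infinite A)
  then have "sum f A = 0" by simp
  then show ?case by (simp only: fs_zero)
qed auto

lemma fs_fmul[simp]: assumes "fs f" "fs g" shows "fs (fmul f g)"
proof -
  have "{w. fmul f g w \<noteq> 0} \<subseteq> (\<lambda>(u,v). u @ v) ` ({w. f w \<noteq> 0} \<times> {w. g w \<noteq> 0})"
  proof
    fix w assume "w \<in> {w. fmul f g w \<noteq> 0}"
    then have "(\<Sum>i\<le>length w. f (take i w) * g (drop i w)) \<noteq> 0" by (simp add: fmul_def)
    then obtain i where "f (take i w) * g (drop i w) \<noteq> 0"
      by (meson sum.not_neutral_contains_not_neutral)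
    then show "w \<in> (\<lambda>(u,v). u @ v) ` ({w. f w \<noteq> 0} \<times> {w. g w \<noteq> 0})"
      by (intro image_eqI[where x="(take i w, drop i w)"]) auto
  qed
  moreover have "finite ((\<lambda>(u,v). u @ v) ` ({w. f w \<noteq> 0} \<times> {w. g w \<noteq> 0}))"
    using assms unfolding fs_def by simp
  ultimately show ?thesis unfolding fs_def by (rule finite_subset)
qed

lemma fs_fprod[simp]: "(\<And>e. e \<in> set es \<Longrightarrow> fs e) \<Longrightarrow> fs (fprod es)"
  by (induction es) auto

lemma fs_psign[simp]: "fs f \<Longrightarrow> fs (psign f)"
  unfolding fs_def psign_def by (rule finite_subset[of _ "{w. f w \<noteq> 0}"]) auto

lemma fs_dup[simp]: "fs (dup n eta i)" by (simp add: dup_def)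
lemma fs_Xel[simp]: "fs (Xel n)" by (simp add: Xel_def)
lemma fs_adX[simp]: "fs b \<Longrightarrow> fs (adX n b)" by (simp add: adX_def)

lemma fs_decomp:
  assumes "fs f" shows "f = (\<Sum>w\<in>{w. f w \<noteq> 0}. fscale (f w) (mono w))"
proof (rule ext)
  fix u
  have fin: "finite {w. f w \<noteq> 0}" using assms by (simp add: fs_def)
  have "(\<Sum>w\<in>{w. f w \<noteq> 0}. fscale (f w) (mono w)) u = (\<Sum>w\<in>{w. f w \<noteq> 0}. fscale (f w) (mono w) u)"
    by (rule lin_sum[where L="\<lambda>a. a u"]) simp_all
  also have "\<dots> = f u"
  proof (cases "f u = 0")
    case True then show ?thesis by (auto simp: fscale_def mono_def intro!: sum.neutral)
  next
    case False
    have "(\<Sum>w\<in>{w. f w \<noteq> 0}. fscale (f w) (mono w) u) = (\<Sum>w\<in>{u}. fscale (f w) (mono w) u)"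
      by (rule sum.mono_neutral_right) (use fin False in \<open>auto simp: fscale_def mono_def\<close>)
    then show ?thesis by (simp add: fscale_def mono_def)
  qed
  finally show "f u = (\<Sum>w\<in>{w. f w \<noteq> 0}. fscale (f w) (mono w)) u" by simp
qed


lemma Wideal_sum: "(\<And>i. i \<in> I \<Longrightarrow> f i \<in> Wideal n eta) \<Longrightarrow> (\<Sum>i\<in>I. f i) \<in> Wideal n eta"
proof (induction I rule: infinite_finite_induct)
  case (infinite A)
  then have e: "sum f A = 0" by simp
  show ?case unfolding e by (rule Wideal.zero)
next
  case empty
  have e: "sum f {} = 0" by simp
  show ?case unfolding e by (rule Wideal.zero)
next
  case (insert x F)
  then have e: "sum f (insert x F) = f x + sum f F" by simp
  show ?case unfolding e by (rule Wideal.add; use insert in auto)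
qed

lemma Wideal_uminus: "a \<in> Wideal n eta \<Longrightarrow> - a \<in> Wideal n eta"
proof -
  assume a: "a \<in> Wideal n eta"
  have e: "- a = fscale (-1) a" by (simp add: fscale_minus1)
  show "- a \<in> Wideal n eta" unfolding e by (rule Wideal.scale[OF a])
qed

lemma Wideal_diff: "a \<in> Wideal n eta \<Longrightarrow> b \<in> Wideal n eta \<Longrightarrow> a - b \<in> Wideal n eta"
proof -
  assume a: "a \<in> Wideal n eta" and b: "b \<in> Wideal n eta"
  have e: "a - b = a + (- b)" by simp
  show "a - b \<in> Wideal n eta" unfolding e by (rule Wideal.add[OF a Wideal_uminus[OF b]])
qed

lemma relator_in: "r \<in> relators n eta \<Longrightarrow> r \<in> Wideal n eta"
  using Wideal.gen[of r n eta "[]" "[]"] by simp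

lemma Wideal_mono_left: "a \<in> Wideal n eta \<Longrightarrow> fmul (mono u) a \<in> Wideal n eta"
proof (induction rule: Wideal.induct)
  case zero show ?case unfolding fmul_zero_right by (rule Wideal.zero)
next
  case (gen r u' v)
  have e: "fmul (mono u) (fmul (mono u') (fmul r (mono v))) = fmul (mono (u @ u')) (fmul r (mono v))"
    by (simp add: fmul_assoc[symmetric] fmul_mono_mono)
  show ?case unfolding e by (rule Wideal.gen[OF gen])
next
  case (add a b) show ?case unfolding fmul_add_right by (rule Wideal.add[OF add.IH])
next
  case (scale a c) show ?case unfolding fmul_scale_right by (rule Wideal.scale[OF scale.IH])
qed

lemma Wideal_mono_right: "a \<in> Wideal n eta \<Longrightarrow> fmul a (mono v) \<in> Wideal n eta"
proof (induction rule: Wideal.induct)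
  case zero show ?case unfolding fmul_zero_left by (rule Wideal.zero)
next
  case (gen r u v')
  have e: "fmul (fmul (mono u) (fmul r (mono v'))) (mono v) = fmul (mono u) (fmul r (mono (v' @ v)))"
    by (simp add: fmul_assoc fmul_mono_mono)
  show ?case unfolding e by (rule Wideal.gen[OF gen])
next
  case (add a b) show ?case unfolding fmul_add_left by (rule Wideal.add[OF add.IH])
next
  case (scale a c) show ?case unfolding fmul_scale_left by (rule Wideal.scale[OF scale.IH])
qed

lemma Wideal_mul_left: assumes "fs f" "a \<in> Wideal n eta" shows "fmul f a \<in> Wideal n eta"
proof -
  have e: "fmul f a = (\<Sum>w\<in>{w. f w \<noteq> 0}. fscale (f w) (fmul (mono w) a))"
    by (subst fs_decomp[OF assms(1)]) (simp only: fmul_sum_left fmul_scale_left)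
  show ?thesis unfolding e
    by (rule Wideal_sum, rule Wideal.scale, rule Wideal_mono_left, rule assms(2))
qed

lemma Wideal_mul_right: assumes "fs f" "a \<in> Wideal n eta" shows "fmul a f \<in> Wideal n eta"
proof -
  have e: "fmul a f = (\<Sum>w\<in>{w. f w \<noteq> 0}. fscale (f w) (fmul a (mono w)))"
    by (subst fs_decomp[OF assms(1)]) (simp only: fmul_sum_right fmul_scale_right)
  show ?thesis unfolding e
    by (rule Wideal_sum, rule Wideal.scale, rule Wideal_mono_right, rule assms(2))
qed


lemma psign_add: "psign (a + b) = psign a + psign b"
  by (auto simp: psign_def fun_eq_iff algebra_simps)
lemma psign_diff: "psign (a - b) = psign a - psign b"
  by (auto simp: psign_def fun_eq_iff algebra_simps)
lemma psign_zero[simp]: "psign 0 = 0"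
  by (auto simp: psign_def fun_eq_iff)
lemma psign_scale: "psign (fscale c a) = fscale c (psign a)"
  by (auto simp: psign_def fscale_def fun_eq_iff)
lemma psign_sum: "psign (\<Sum>i\<in>I. f i) = (\<Sum>i\<in>I. psign (f i))"
  by (rule lin_sum[where L=psign]) (simp_all add: psign_add)
lemma psign_fmul: "psign (fmul a b) = fmul (psign a) (psign b)"
proof (rule ext)
  fix w :: "gen list"
  have "\<And>i. length (filter isG w) = length (filter isG (take i w)) + length (filter isG (drop i w))"
    by (metis append_take_drop_id filter_append length_append)
  then have h: "\<And>i. (-1::complex) ^ length (filter isG w) = (-1) ^ length (filter isG (take i w)) * (-1) ^ length (filter isG (drop i w))"
    by (metis power_add)
  show "psign (fmul a b) w = fmul (psign a) (psign b) w"
    by (auto simp: psign_def fmul_def sum_distrib_left h intro!: sum.cong)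
qed
lemma psign_mono: "psign (mono w) = fscale ((-1) ^ length (filter isG w)) (mono w)"
  by (auto simp: psign_def fscale_def mono_def fun_eq_iff)

lemma psign_relator: assumes "r \<in> relators n eta" shows "psign r = r \<or> psign r = - r"
  using assms unfolding relators_def
  by (elim UnE CollectE exE conjE)
     (simp_all add: psign_diff psign_add psign_mono psign_scale isG_def fscale_minus1)

lemma Wideal_psign: "a \<in> Wideal n eta \<Longrightarrow> psign a \<in> Wideal n eta"
proof (induction rule: Wideal.induct)
  case zero show ?case unfolding psign_zero by (rule Wideal.zero)
next
  case (gen r u v)
  define s where "s = (-1::complex) ^ length (filter isG u) * (-1) ^ length (filter isG v)"
  have e: "psign (fmul (mono u) (fmul r (mono v))) = fscale s (fmul (mono u) (fmul (psign r) (mono v)))"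
    by (simp add: psign_fmul psign_mono s_def fmul_scale_left fmul_scale_right mult.commute)
  from psign_relator[OF gen] show ?case
  proof
    assume "psign r = r"
    then show ?case unfolding e by (simp only:) (rule Wideal.scale, rule Wideal.gen[OF gen])
  next
    assume "psign r = - r"
    then have "psign (fmul (mono u) (fmul r (mono v))) = fscale (- s) (fmul (mono u) (fmul r (mono v)))"
      unfolding e by (simp add: fscale_minus1[symmetric] fmul_scale_left fmul_scale_right)
    then show ?case by (simp only:) (rule Wideal.scale, rule Wideal.gen[OF gen])
  qed
next
  case (add a b) show ?case unfolding psign_add by (rule Wideal.add[OF add.IH])
next
  case (scale a c) show ?case unfolding psign_scale by (rule Wideal.scale[OF scale.IH])
qed

lemma adX_add: "adX n (a + b) = adX n a + adX n b"
  by (simp add: adX_def fmul_add_left fmul_add_right psign_add)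
lemma adX_diff: "adX n (a - b) = adX n a - adX n b"
  by (simp add: adX_def fmul_diff_left fmul_diff_right psign_diff)
lemma adX_zero[simp]: "adX n 0 = 0"
  by (simp add: adX_def)
lemma adX_scale: "adX n (fscale c a) = fscale c (adX n a)"
  by (simp add: adX_def fmul_scale_left fmul_scale_right psign_scale fscale_diff)
lemma adX_sum: "adX n (\<Sum>i\<in>I. f i) = (\<Sum>i\<in>I. adX n (f i))"
  by (rule lin_sum[where L="adX n"]) (simp_all add: adX_add)
lemma adX_fmul: "adX n (fmul a b) = fmul (adX n a) b + fmul (psign a) (adX n b)"
  by (simp add: adX_def fmul_diff_left fmul_diff_right psign_fmul fmul_assoc)

lemma Wideal_adX: "a \<in> Wideal n eta \<Longrightarrow> adX n a \<in> Wideal n eta"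
  unfolding adX_def
  by (intro Wideal_diff Wideal_mul_left Wideal_mul_right Wideal_psign fs_Xel)

lemma Weq_refl[simp]: "Weq n eta a a" unfolding Weq_def by (simp only: diff_self) (rule Wideal.zero)
lemma Weq_sym: assumes "Weq n eta a b" shows "Weq n eta b a"
proof -
  have e: "b - a = - (a - b)" by simp
  show ?thesis using assms unfolding Weq_def e by (rule Wideal_uminus)
qed
lemma Weq_trans[trans]: assumes "Weq n eta a b" "Weq n eta b c" shows "Weq n eta a c"
proof -
  have e: "a - c = (a - b) + (b - c)" by (simp add: algebra_simps)
  show ?thesis using assms unfolding Weq_def e by (rule Wideal.add)
qed
lemma Weq_eq_trans[trans]: "a = b \<Longrightarrow> Weq n eta b c \<Longrightarrow> Weq n eta a c" by simp
lemma Weq_trans_eq[trans]: "Weq n eta a b \<Longrightarrow> b = c \<Longrightarrow> Weq n eta a c" by simp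
lemma Weq_add: assumes "Weq n eta a b" "Weq n eta c d" shows "Weq n eta (a + c) (b + d)"
proof -
  have e: "(a + c) - (b + d) = (a - b) + (c - d)" by (simp add: algebra_simps)
  show ?thesis using assms unfolding Weq_def e by (rule Wideal.add)
qed
lemma Weq_diff: assumes "Weq n eta a b" "Weq n eta c d" shows "Weq n eta (a - c) (b - d)"
proof -
  have e: "(a - c) - (b - d) = (a - b) - (c - d)" by (simp add: algebra_simps)
  show ?thesis using assms unfolding Weq_def e by (rule Wideal_diff)
qed
lemma Weq_scale: assumes "Weq n eta a b" shows "Weq n eta (fscale c a) (fscale c b)"
  using assms unfolding Weq_def fscale_diff[symmetric] by (rule Wideal.scale)
lemma Weq_sum: assumes "\<And>i. i \<in> I \<Longrightarrow> Weq n eta (f i) (g i)"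
  shows "Weq n eta (\<Sum>i\<in>I. f i) (\<Sum>i\<in>I. g i)"
  unfolding Weq_def sum_subtractf[symmetric] by (rule Wideal_sum) (use assms in \<open>simp add: Weq_def\<close>)
lemma Weq_mul_left: assumes "fs f" "Weq n eta a b" shows "Weq n eta (fmul f a) (fmul f b)"
  using assms(2) unfolding Weq_def fmul_diff_right[symmetric] by (rule Wideal_mul_left[OF assms(1)])
lemma Weq_mul_right: assumes "fs f" "Weq n eta a b" shows "Weq n eta (fmul a f) (fmul b f)"
  using assms(2) unfolding Weq_def fmul_diff_left[symmetric] by (rule Wideal_mul_right[OF assms(1)])
lemma Weq_mul: "fs a \<Longrightarrow> fs d \<Longrightarrow> Weq n eta a b \<Longrightarrow> Weq n eta c d \<Longrightarrow> Weq n eta (fmul a c) (fmul b d)"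
  using Weq_mul_left Weq_mul_right Weq_trans by blast
lemma Weq_adX: assumes "Weq n eta a b" shows "Weq n eta (adX n a) (adX n b)"
  using assms unfolding Weq_def adX_diff[symmetric] by (rule Wideal_adX)
lemma Weq_psign: assumes "Weq n eta a b" shows "Weq n eta (psign a) (psign b)"
  using assms unfolding Weq_def psign_diff[symmetric] by (rule Wideal_psign)
lemma Weq_rel: "r \<in> relators n eta \<Longrightarrow> Weq n eta r 0"
  unfolding Weq_def diff_zero by (rule relator_in)


abbreviation xx :: "nat \<Rightarrow> fa" where "xx i \<equiv> mono [GX i]"
abbreviation gg :: "nat \<Rightarrow> fa" where "gg i \<equiv> mono [GG i]"

lemma Weq_of_diff: "a - b = r \<Longrightarrow> r \<in> Wideal n eta \<Longrightarrow> Weq n eta a b"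
  unfolding Weq_def by simp

lemma ctx_in: "r \<in> relators n eta \<Longrightarrow> fmul (mono u) (fmul r (mono v)) \<in> Wideal n eta"
  by (rule Wideal.gen)

lemma ctx_diff: "fmul (mono u) (fmul (mono a - mono b) (mono v)) = mono (u @ a @ v) - mono (u @ b @ v)"
  by (simp add: fmul_diff_left fmul_diff_right fmul_mono_mono)

lemma rel_xx: "i \<in> {1..n} \<Longrightarrow> j \<in> {1..n} \<Longrightarrow> mono [GX i, GX j] - mono [GX j, GX i] \<in> relators n eta"
  unfolding relators_def by blast
lemma rel_dd: "i \<in> {1..n} \<Longrightarrow> j \<in> {1..n} \<Longrightarrow> mono [GD i, GD j] - mono [GD j, GD i] \<in> relators n eta"
  unfolding relators_def by blast
lemma rel_dx: "i \<in> {1..n} \<Longrightarrow> j \<in> {1..n} \<Longrightarrow>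
   mono [GD i, GX j] - mono [GX j, GD i] - (if i = j then mono [] else 0) \<in> relators n eta"
  unfolding relators_def by blast
lemma rel_gx: "i \<in> {1..n} \<Longrightarrow> j \<in> {1..n} \<Longrightarrow> mono [GG i, GX j] - mono [GX j, GG i] \<in> relators n eta"
  unfolding relators_def by blast
lemma rel_gd: "i \<in> {1..n} \<Longrightarrow> j \<in> {1..n} \<Longrightarrow> mono [GG i, GD j] - mono [GD j, GG i] \<in> relators n eta"
  unfolding relators_def by blast
lemma rel_gg: "i \<in> {1..n} \<Longrightarrow> j \<in> {1..n} \<Longrightarrow>
   mono [GG i, GG j] + mono [GG j, GG i] - fscale (2 * eta i j) (mono []) \<in> relators n eta"
  unfolding relators_def by blast

lemma sw_plain:
  assumes "mono [a, b] - mono [b, a] \<in> relators n eta"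
  shows "Weq n eta (mono (u @ a # b # v)) (mono (u @ b # a # v))"
  using ctx_in[OF assms, of u v] by (intro Weq_of_diff) (simp_all add: ctx_diff)

lemma sw_xx: "i \<in> {1..n} \<Longrightarrow> j \<in> {1..n} \<Longrightarrow> Weq n eta (mono (u @ GX i # GX j # v)) (mono (u @ GX j # GX i # v))"
  by (rule sw_plain, rule rel_xx)
lemma sw_dd: "i \<in> {1..n} \<Longrightarrow> j \<in> {1..n} \<Longrightarrow> Weq n eta (mono (u @ GD i # GD j # v)) (mono (u @ GD j # GD i # v))"
  by (rule sw_plain, rule rel_dd)
lemma sw_gx: "i \<in> {1..n} \<Longrightarrow> j \<in> {1..n} \<Longrightarrow> Weq n eta (mono (u @ GG i # GX j # v)) (mono (u @ GX j # GG i # v))"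
  by (rule sw_plain, rule rel_gx)
lemma sw_gd: "i \<in> {1..n} \<Longrightarrow> j \<in> {1..n} \<Longrightarrow> Weq n eta (mono (u @ GG i # GD j # v)) (mono (u @ GD j # GG i # v))"
  by (rule sw_plain, rule rel_gd)

lemma sw_dx: assumes "i \<in> {1..n}" "j \<in> {1..n}"
  shows "Weq n eta (mono (u @ GD i # GX j # v)) (mono (u @ GX j # GD i # v) + (if i = j then mono (u @ v) else 0))"
proof (rule Weq_of_diff)
  show "fmul (mono u) (fmul (mono [GD i, GX j] - mono [GX j, GD i] - (if i = j then mono [] else 0)) (mono v)) \<in> Wideal n eta"
    by (rule ctx_in, rule rel_dx[OF assms])
  show "mono (u @ GD i # GX j # v) - (mono (u @ GX j # GD i # v) + (if i = j then mono (u @ v) else 0)) =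
    fmul (mono u) (fmul (mono [GD i, GX j] - mono [GX j, GD i] - (if i = j then mono [] else 0)) (mono v))"
    by (simp add: fmul_diff_left fmul_diff_right fmul_add_left fmul_add_right fmul_mono_mono algebra_simps)
qed

lemma sw_gg: assumes "i \<in> {1..n}" "j \<in> {1..n}"
  shows "Weq n eta (mono (u @ GG i # GG j # v)) (fscale (2 * eta i j) (mono (u @ v)) - mono (u @ GG j # GG i # v))"
proof (rule Weq_of_diff)
  show "fmul (mono u) (fmul (mono [GG i, GG j] + mono [GG j, GG i] - fscale (2 * eta i j) (mono [])) (mono v)) \<in> Wideal n eta"
    by (rule ctx_in, rule rel_gg[OF assms])
  show "mono (u @ GG i # GG j # v) - (fscale (2 * eta i j) (mono (u @ v)) - mono (u @ GG j # GG i # v)) =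
    fmul (mono u) (fmul (mono [GG i, GG j] + mono [GG j, GG i] - fscale (2 * eta i j) (mono [])) (mono v))"
    by (simp add: fmul_diff_left fmul_diff_right fmul_add_left fmul_add_right fmul_mono_mono
        fmul_scale_left fmul_scale_right algebra_simps)
qed


lemma Weq_move: "Weq n eta a (b + c) \<Longrightarrow> Weq n eta (a - b) c"
  unfolding Weq_def by (simp add: algebra_simps)
lemma Weq_move2: "Weq n eta a (c - b) \<Longrightarrow> Weq n eta (a + b) c"
  unfolding Weq_def by (simp add: algebra_simps)

lemma fmul_uminus_left: "fmul (- a) b = - fmul a b"
  by (auto simp: fmul_def fun_eq_iff sum_negf)

lemma fscale_uminus: "fscale c (- a) = - fscale c a"
  by (auto simp: fscale_def fun_eq_iff)

lemma Xel_expand: "Xel n = fscale cX (\<Sum>j\<in>{1..n}. mono [GG j, GD j])"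
  by (simp add: Xel_def)

lemma psign_xx[simp]: "psign (mono [GX i]) = mono [GX i]"
  by (simp add: psign_mono isG_def)
lemma psign_gg[simp]: "psign (mono [GG i]) = - mono [GG i]"
  by (simp add: psign_mono isG_def fscale_minus1)
lemma psign_DD[simp]: "psign (mono [GD i]) = mono [GD i]"
  by (simp add: psign_mono isG_def)
lemma psign_dup[simp]: "psign (dup n eta i) = dup n eta i"
  by (simp add: dup_def psign_sum psign_scale)

lemma adX_xx_j: assumes "i \<in> {1..n}" "j \<in> {1..n}"
  shows "Weq n eta (mono [GG j, GD j, GX i] - mono [GX i, GG j, GD j]) (if j = i then mono [GG j] else 0)"
proof (rule Weq_move)
  have "Weq n eta (mono [GG j, GD j, GX i]) (mono [GG j, GX i, GD j] + (if j = i then mono [GG j] else 0))"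
    using sw_dx[OF assms(2,1), where u="[GG j]" and v="[]" and eta=eta] by (simp only: append.simps append_Nil2)
  also have "Weq n eta (mono [GG j, GX i, GD j] + (if j = i then mono [GG j] else 0))
     (mono [GX i, GG j, GD j] + (if j = i then mono [GG j] else 0))"
    using Weq_add[OF sw_gx[OF assms(2,1), where u="[]" and v="[GD j]" and eta=eta] Weq_refl] by simp
  finally show "Weq n eta (mono [GG j, GD j, GX i]) (mono [GX i, GG j, GD j] + (if j = i then mono [GG j] else 0))"
    by simp
qed

lemma adX_xx: assumes "i \<in> {1..n}"
  shows "Weq n eta (adX n (mono [GX i])) (fscale cX (mono [GG i]))"
proof -
  have "adX n (mono [GX i]) = fscale cX (\<Sum>j\<in>{1..n}. mono [GG j, GD j, GX i] - mono [GX i, GG j, GD j])"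
    by (simp add: adX_def Xel_expand fmul_scale_left fmul_scale_right fmul_sum_left fmul_sum_right
        fmul_mono_mono sum_subtractf fscale_diff)
  also have "Weq n eta \<dots> (fscale cX (\<Sum>j\<in>{1..n}. (if j = i then mono [GG j] else 0)))"
    by (rule Weq_scale, rule Weq_sum, rule adX_xx_j[OF assms])
  also have "(\<Sum>j\<in>{1..n}. (if j = i then mono [GG j] else 0)) = mono [GG i]"
    using assms by simp
  finally show ?thesis .
qed

lemma adX_gg_j: assumes "i \<in> {1..n}" "j \<in> {1..n}"
  shows "Weq n eta (mono [GG j, GD j, GG i] + mono [GG i, GG j, GD j]) (fscale (2 * eta j i) (mono [GD j]))"
proof (rule Weq_move2)
  have "Weq n eta (mono [GG j, GD j, GG i]) (mono [GG j, GG i, GD j])"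
    using Weq_sym[OF sw_gd[OF assms(1,2), where u="[GG j]" and v="[]" and eta=eta]] by simp
  also have "Weq n eta (mono [GG j, GG i, GD j]) (fscale (2 * eta j i) (mono [GD j]) - mono [GG i, GG j, GD j])"
    using sw_gg[OF assms(2,1), where u="[]" and v="[GD j]" and eta=eta] by simp
  finally show "Weq n eta (mono [GG j, GD j, GG i]) (fscale (2 * eta j i) (mono [GD j]) - mono [GG i, GG j, GD j])"
    by simp
qed

lemma adX_gg: assumes "i \<in> {1..n}" and sym: "\<forall>i\<in>{1..n}. \<forall>j\<in>{1..n}. eta i j = eta j i"
  shows "Weq n eta (adX n (mono [GG i])) (fscale (2 * cX) (dup n eta i))"
proof -
  have "adX n (mono [GG i]) = fscale cX (\<Sum>j\<in>{1..n}. mono [GG j, GD j, GG i] + mono [GG i, GG j, GD j])"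
    by (simp add: adX_def Xel_expand fmul_scale_left fmul_scale_right fmul_sum_left fmul_sum_right
        fmul_mono_mono sum.distrib fscale_add fscale_minus1 fmul_uminus_left fscale_uminus sum_negf)
  also have "Weq n eta \<dots> (fscale cX (\<Sum>j\<in>{1..n}. fscale (2 * eta j i) (mono [GD j])))"
    by (rule Weq_scale, rule Weq_sum, rule adX_gg_j[OF assms(1)])
  also have "fscale cX (\<Sum>j\<in>{1..n}. fscale (2 * eta j i) (mono [GD j])) = fscale (2 * cX) (dup n eta i)"
    using assms by (simp add: dup_def fscale_sum mult.commute mult.left_commute)
  finally show ?thesis .
qed

lemma adX_DD_j: assumes "l \<in> {1..n}" "j \<in> {1..n}"
  shows "Weq n eta (mono [GG j, GD j, GD l] - mono [GD l, GG j, GD j]) 0"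
proof -
  have "Weq n eta (mono [GD l, GG j, GD j]) (mono [GG j, GD l, GD j])"
    using Weq_sym[OF sw_gd[OF assms(2,1), where u="[]" and v="[GD j]" and eta=eta]] by simp
  also have "Weq n eta (mono [GG j, GD l, GD j]) (mono [GG j, GD j, GD l])"
    using sw_dd[OF assms, where u="[GG j]" and v="[]" and eta=eta] by simp
  finally have "Weq n eta (mono [GD l, GG j, GD j]) (mono [GG j, GD j, GD l])" by simp
  then have "Weq n eta (mono [GG j, GD j, GD l] - mono [GD l, GG j, GD j]) (mono [GG j, GD j, GD l] - mono [GG j, GD j, GD l])"
    by (rule Weq_diff[OF Weq_refl])
  then show ?thesis by simp
qed

lemma adX_DD: assumes "l \<in> {1..n}"
  shows "Weq n eta (adX n (mono [GD l])) 0"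
proof -
  have "adX n (mono [GD l]) = fscale cX (\<Sum>j\<in>{1..n}. mono [GG j, GD j, GD l] - mono [GD l, GG j, GD j])"
    by (simp add: adX_def Xel_expand fmul_scale_left fmul_scale_right fmul_sum_left fmul_sum_right
        fmul_mono_mono sum_subtractf fscale_diff)
  also have "Weq n eta \<dots> (fscale cX (\<Sum>j\<in>{1..n}. 0))"
    by (rule Weq_scale, rule Weq_sum, rule adX_DD_j[OF assms])
  finally show ?thesis by simp
qed

lemma adX_dup: assumes "i \<in> {1..n}"
  shows "Weq n eta (adX n (dup n eta i)) 0"
proof -
  have "adX n (dup n eta i) = (\<Sum>l\<in>{1..n}. fscale (eta i l) (adX n (mono [GD l])))"
    by (simp add: dup_def adX_sum adX_scale)
  also have "Weq n eta \<dots> (\<Sum>l\<in>{1..n}. fscale (eta i l) 0)"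
    by (rule Weq_sum, rule Weq_scale, rule adX_DD) simp
  finally show ?thesis by simp
qed


lemma fs_fprod_map[simp]: "\<forall>x\<in>set L. fs (f x) \<Longrightarrow> fs (fprod (map f L))"
  by (induction L) auto

lemma fs_fprod_append[simp]: "fs (fprod xs) \<Longrightarrow> fs (fprod ys) \<Longrightarrow> fs (fprod (xs @ ys))"
  by (simp add: fprod_append)

definition comm :: "nat \<Rightarrow> (nat \<Rightarrow> nat \<Rightarrow> complex) \<Rightarrow> fa set \<Rightarrow> bool" where
  "comm n eta S \<longleftrightarrow> (\<forall>a\<in>S. fs a) \<and> (\<forall>a\<in>S. \<forall>b\<in>S. Weq n eta (fmul a b) (fmul b a))"

lemma comm_past:
  assumes "fs e" "\<And>a. a \<in> set L \<Longrightarrow> fs a" "\<And>a. a \<in> set L \<Longrightarrow> Weq n eta (fmul e a) (fmul a e)"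
  shows "Weq n eta (fmul e (fprod L)) (fmul (fprod L) e)"
  using assms(2,3)
proof (induction L)
  case Nil then show ?case by simp
next
  case (Cons a L)
  have fa: "fs a" using Cons by simp
  have fL: "fs (fprod L)" using Cons by simp
  have "fmul e (fprod (a # L)) = fmul (fmul e a) (fprod L)" by (simp add: fmul_assoc)
  also have "Weq n eta \<dots> (fmul (fmul a e) (fprod L))"
    by (rule Weq_mul_right[OF fL], rule Cons.prems(2)) simp
  also have "fmul (fmul a e) (fprod L) = fmul a (fmul e (fprod L))" by (simp add: fmul_assoc)
  also have "Weq n eta \<dots> (fmul a (fmul (fprod L) e))"
    by (rule Weq_mul_left[OF fa], rule Cons.IH) (use Cons.prems in auto)
  also have "fmul a (fmul (fprod L) e) = fmul (fprod (a # L)) e" by (simp add: fmul_assoc)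
  finally show ?case .
qed

lemma comm_mset:
  assumes "comm n eta S" "set xs \<subseteq> S" "mset xs = mset ys"
  shows "Weq n eta (fprod xs) (fprod ys)"
  using assms(2,3)
proof (induction xs arbitrary: ys)
  case Nil then show ?case by simp
next
  case (Cons x xs)
  have "x \<in> set ys" using Cons.prems(2) by (metis list.set_intros(1) set_mset_mset)
  then obtain ys1 ys2 where ys: "ys = ys1 @ x # ys2" by (meson split_list)
  have setys: "set ys \<subseteq> S" using Cons.prems by (metis set_mset_mset)
  have fsS: "\<And>a. a \<in> S \<Longrightarrow> fs a" using assms(1) by (simp add: comm_def)
  have cS: "\<And>a b. a \<in> S \<Longrightarrow> b \<in> S \<Longrightarrow> Weq n eta (fmul a b) (fmul b a)" using assms(1) by (simp add: comm_def)
  have xS: "x \<in> S" using Cons.prems by simp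
  have ms: "mset xs = mset (ys1 @ ys2)" using Cons.prems(2) ys by simp
  have fy1: "fs (fprod ys1)" using setys ys fsS by (intro fs_fprod) auto
  have fy2: "fs (fprod ys2)" using setys ys fsS by (intro fs_fprod) auto
  have fx: "fs x" using xS fsS by simp
  have "Weq n eta (fprod (x # xs)) (fmul x (fprod (ys1 @ ys2)))"
    unfolding fprod.simps
    by (rule Weq_mul_left[OF fx], rule Cons.IH) (use Cons.prems ms in auto)
  also have "fmul x (fprod (ys1 @ ys2)) = fmul (fmul x (fprod ys1)) (fprod ys2)"
    by (simp add: fprod_append fmul_assoc)
  also have "Weq n eta \<dots> (fmul (fmul (fprod ys1) x) (fprod ys2))"
    by (rule Weq_mul_right[OF fy2], rule comm_past[OF fx])
       (use setys ys fsS cS xS in auto)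
  also have "fmul (fmul (fprod ys1) x) (fprod ys2) = fprod ys"
    by (simp add: ys fprod_append fmul_assoc)
  finally show ?case .
qed

lemma comm_xx: "comm n eta ((\<lambda>i. mono [GX i]) ` {1..n})"
  unfolding comm_def
  by (auto simp: fmul_mono_mono intro: sw_xx[where u="[]" and v="[]", simplified])

lemma xx_mset:
  assumes "set A \<subseteq> {1..n}" "mset A = mset B"
  shows "Weq n eta (fprod (map (\<lambda>i. mono [GX i]) A)) (fprod (map (\<lambda>i. mono [GX i]) B))"
  by (rule comm_mset[OF comm_xx]) (use assms in auto)

lemma gg_xx_comm: "i \<in> {1..n} \<Longrightarrow> j \<in> {1..n} \<Longrightarrow> Weq n eta (fmul (mono [GG i]) (mono [GX j])) (fmul (mono [GX j]) (mono [GG i]))"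
  using sw_gx[where u="[]" and v="[]" and eta=eta] by (simp add: fmul_mono_mono)

lemma gg_past_xx:
  assumes "i \<in> {1..n}" "set A \<subseteq> {1..n}"
  shows "Weq n eta (fmul (mono [GG i]) (fprod (map (\<lambda>i. mono [GX i]) A))) (fmul (fprod (map (\<lambda>i. mono [GX i]) A)) (mono [GG i]))"
  by (rule comm_past) (use assms gg_xx_comm in auto)

lemma adX_xblock:
  assumes "set A \<subseteq> {1..n}" "fs Y"
  shows "Weq n eta (adX n (fmul (fprod (map (\<lambda>i. mono [GX i]) A)) Y))
     ((\<Sum>l<length A. fscale cX (fmul (fprod (map (\<lambda>i. mono [GX i]) (take l A @ drop (Suc l) A)))
          (fmul (mono [GG (A ! l)]) Y)))
      + fmul (fprod (map (\<lambda>i. mono [GX i]) A)) (adX n Y))"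
  using assms(1)
proof (induction A)
  case Nil then show ?case by simp
next
  case (Cons a A)
  let ?P = "fprod (map (\<lambda>i. mono [GX i]) A)"
  have a: "a \<in> {1..n}" and A: "set A \<subseteq> {1..n}" using Cons.prems by auto
  have fP: "fs ?P" by simp
  have "adX n (fmul (fprod (map (\<lambda>i. mono [GX i]) (a # A))) Y)
        = fmul (adX n (mono [GX a])) (fmul ?P Y) + fmul (mono [GX a]) (adX n (fmul ?P Y))"
    by (simp add: fmul_assoc adX_fmul)
  also have "Weq n eta \<dots> (fmul (fscale cX (mono [GG a])) (fmul ?P Y) +
     fmul (mono [GX a]) ((\<Sum>l<length A. fscale cX (fmul (fprod (map (\<lambda>i. mono [GX i]) (take l A @ drop (Suc l) A)))
          (fmul (mono [GG (A ! l)]) Y))) + fmul ?P (adX n Y)))"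
    by (rule Weq_add; rule Weq_mul_right Weq_mul_left; (rule adX_xx[OF a] | rule Cons.IH[OF A])?)
       (use assms(2) in simp_all)
  also have "fmul (fscale cX (mono [GG a])) (fmul ?P Y) = fscale cX (fmul (fmul (mono [GG a]) ?P) Y)"
    by (simp add: fmul_scale_left fmul_assoc)
  also have "Weq n eta (fscale cX (fmul (fmul (mono [GG a]) ?P) Y) + fmul (mono [GX a]) ((\<Sum>l<length A. fscale cX (fmul (fprod (map (\<lambda>i. mono [GX i]) (take l A @ drop (Suc l) A)))
          (fmul (mono [GG (A ! l)]) Y))) + fmul ?P (adX n Y)))
     (fscale cX (fmul (fmul ?P (mono [GG a])) Y) + fmul (mono [GX a]) ((\<Sum>l<length A. fscale cX (fmul (fprod (map (\<lambda>i. mono [GX i]) (take l A @ drop (Suc l) A)))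
          (fmul (mono [GG (A ! l)]) Y))) + fmul ?P (adX n Y)))"
    by (rule Weq_add[OF _ Weq_refl], rule Weq_scale, rule Weq_mul_right[OF assms(2)], rule gg_past_xx[OF a A])
  also have "fscale cX (fmul (fmul ?P (mono [GG a])) Y) + fmul (mono [GX a]) ((\<Sum>l<length A. fscale cX (fmul (fprod (map (\<lambda>i. mono [GX i]) (take l A @ drop (Suc l) A)))
          (fmul (mono [GG (A ! l)]) Y))) + fmul ?P (adX n Y))
     = (\<Sum>l<length (a # A). fscale cX (fmul (fprod (map (\<lambda>i. mono [GX i]) (take l (a # A) @ drop (Suc l) (a # A))))
          (fmul (mono [GG ((a # A) ! l)]) Y)))
      + fmul (fprod (map (\<lambda>i. mono [GX i]) (a # A))) (adX n Y)"
    by (simp only: length_Cons sum.lessThan_Suc_shift)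
       (simp add: fmul_add_right fmul_sum_right fmul_scale_right fmul_assoc fprod_append del: sum.lessThan_Suc)
  finally show ?case .
qed


lemma adX_dblock:
  assumes "set C \<subseteq> {1..n}"
  shows "Weq n eta (adX n (fprod (map (dup n eta) C))) 0"
  using assms
proof (induction C)
  case Nil
  have "adX n (fprod (map (dup n eta) [])) = 0" by (simp add: adX_def psign_mono)
  then show ?case by simp
next
  case (Cons c C)
  have c: "c \<in> {1..n}" and C: "set C \<subseteq> {1..n}" using Cons.prems by auto
  have "adX n (fprod (map (dup n eta) (c # C))) = fmul (adX n (dup n eta c)) (fprod (map (dup n eta) C)) + fmul (dup n eta c) (adX n (fprod (map (dup n eta) C)))"
    by (simp add: adX_fmul)
  also have "Weq n eta \<dots> (fmul 0 (fprod (map (dup n eta) C)) + fmul (dup n eta c) 0)"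
    by (rule Weq_add, rule Weq_mul_right, simp, rule adX_dup[OF c], rule Weq_mul_left, simp, rule Cons.IH[OF C])
  also have "fmul 0 (fprod (map (dup n eta) C)) + fmul (dup n eta c) 0 = 0"
    by (simp only: fmul_zero_left fmul_zero_right add_0)
  finally show ?case .
qed

lemma adX_g_dblock:
  assumes "i \<in> {1..n}" "set C \<subseteq> {1..n}" and sym: "\<forall>i\<in>{1..n}. \<forall>j\<in>{1..n}. eta i j = eta j i"
  shows "Weq n eta (adX n (fmul (mono [GG i]) (fprod (map (dup n eta) C))))
     (fscale (2 * cX) (fmul (dup n eta i) (fprod (map (dup n eta) C))))"
proof -
  have "adX n (fmul (mono [GG i]) (fprod (map (dup n eta) C))) =
     fmul (adX n (mono [GG i])) (fprod (map (dup n eta) C)) + fmul (- mono [GG i]) (adX n (fprod (map (dup n eta) C)))"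
    by (simp add: adX_fmul)
  also have "Weq n eta \<dots> (fmul (fscale (2 * cX) (dup n eta i)) (fprod (map (dup n eta) C)) + fmul (- mono [GG i]) 0)"
    by (rule Weq_add, rule Weq_mul_right, simp, rule adX_gg[OF assms(1) sym], rule Weq_mul_left, simp, rule adX_dblock[OF assms(2)])
  finally show ?thesis by (simp add: fmul_scale_left)
qed

lemma gg_anti_ctx:
  assumes "x \<in> {1..n}" "y \<in> {1..n}" "fs P" "fs D"
  shows "Weq n eta (fmul P (fmul (mono [GG x]) (fmul (mono [GG y]) D)) + fmul P (fmul (mono [GG y]) (fmul (mono [GG x]) D)))
     (fscale (2 * eta x y) (fmul P D))"
proof -
  have "fmul P (fmul (mono [GG x]) (fmul (mono [GG y]) D)) + fmul P (fmul (mono [GG y]) (fmul (mono [GG x]) D))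
     = fmul P (fmul (mono [GG x, GG y] + mono [GG y, GG x]) D)"
    by (simp add: fmul_add_left fmul_add_right fmul_assoc[symmetric] fmul_mono_mono)
  also have "Weq n eta \<dots> (fmul P (fmul (fscale (2 * eta x y) (mono [])) D))"
  proof (rule Weq_mul_left[OF assms(3)], rule Weq_mul_right[OF assms(4)])
    show "Weq n eta (mono [GG x, GG y] + mono [GG y, GG x]) (fscale (2 * eta x y) (mono []))"
      using sw_gg[OF assms(1,2), where u="[]" and v="[]" and eta=eta]
      unfolding Weq_def by (simp add: algebra_simps)
  qed
  finally show ?thesis by (simp add: fmul_scale_left fmul_scale_right)
qed

definition Wd :: "nat \<Rightarrow> (nat \<Rightarrow> nat \<Rightarrow> complex) \<Rightarrow> nat list \<Rightarrow> (nat \<Rightarrow> nat) \<Rightarrow> nat \<Rightarrow> nat \<Rightarrow> nat \<Rightarrow> fa" where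
  "Wd n eta ids \<sigma> a p q = fprod (map (\<lambda>l. mono [GX (ids ! \<sigma> l)]) [2*a..<2*a+p]
      @ map (\<lambda>l. mono [GG (ids ! \<sigma> l)]) [2*a+p..<2*a+p+q]
      @ map (\<lambda>l. dup n eta (ids ! \<sigma> l)) [2*a+p+q..<length ids])"

definition Ew :: "(nat \<Rightarrow> nat \<Rightarrow> complex) \<Rightarrow> nat list \<Rightarrow> (nat \<Rightarrow> nat) \<Rightarrow> nat \<Rightarrow> complex" where
  "Ew eta ids \<sigma> a = (\<Prod>l<a. eta (ids ! \<sigma> (2*l)) (ids ! \<sigma> (2*l+1)))"

definition SS :: "nat \<Rightarrow> (nat \<Rightarrow> nat \<Rightarrow> complex) \<Rightarrow> nat list \<Rightarrow> nat \<Rightarrow> nat \<Rightarrow> nat \<Rightarrow> fa" where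
  "SS n eta ids a p q = (\<Sum>\<sigma>\<in>{\<sigma>. \<sigma> permutes {..<length ids}}. fscale (Ew eta ids \<sigma> a) (Wd n eta ids \<sigma> a p q))"

lemma bracket_SS: "bracket n eta a (int p) q t ids = fscale (1 / (2 ^ a * fact a * fact p * fact t)) (SS n eta ids a p q)"
  by (simp add: bracket_def SS_def Wd_def Ew_def Let_def)

lemma bracket_neg: "p < 0 \<Longrightarrow> bracket n eta a p q t ids = 0"
  by (simp add: bracket_def)

lemma fs_Wd[simp]: "fs (Wd n eta ids \<sigma> a p q)"
  by (simp add: Wd_def)

lemma R1:
  assumes "l < p"
  shows "mset (map (transpose (lo+l) (lo+p-1)) [lo..<lo+p-1]) = mset (take l [lo..<lo+p] @ drop (Suc l) [lo..<lo+p])"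
proof -
  have d1: "distinct (map (transpose (lo+l) (lo+p-1)) [lo..<lo+p-1])"
    by (simp add: distinct_map inj_on_subset[OF inj_transpose])
  have e: "take l [lo..<lo+p] @ drop (Suc l) [lo..<lo+p] = [lo..<lo+l] @ [Suc (lo+l)..<lo+p]"
    using assms by (simp add: take_upt drop_upt)
  have d2: "distinct ([lo..<lo+l] @ [Suc (lo+l)..<lo+p])" by auto
  have s: "set (map (transpose (lo+l) (lo+p-1)) [lo..<lo+p-1]) = set ([lo..<lo+l] @ [Suc (lo+l)..<lo+p])"
    using assms by (auto simp: transpose_def image_iff)
  show ?thesis unfolding e by (rule set_eq_iff_mset_eq_distinct[THEN iffD1, OF d1 d2 s])
qed


lemma transpose_image_out: "a \<notin> S \<Longrightarrow> b \<in> S \<Longrightarrow> transpose a b ` S = insert a (S - {b})"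
  by (auto simp: transpose_def image_iff split: if_splits)

lemma R2:
  assumes "l < p"
  shows "mset (map (transpose lo (lo+l) \<circ> transpose (lo+1) (lo+p)) [lo+2..<lo+p+1]) = mset (take l [lo..<lo+p] @ drop (Suc l) [lo..<lo+p])"
proof -
  have d1: "distinct (map (transpose lo (lo+l) \<circ> transpose (lo+1) (lo+p)) [lo+2..<lo+p+1])"
    by (simp add: distinct_map inj_on_subset[OF inj_compose[OF inj_transpose inj_transpose]])
  have e: "take l [lo..<lo+p] @ drop (Suc l) [lo..<lo+p] = [lo..<lo+l] @ [Suc (lo+l)..<lo+p]"
    using assms by (simp add: take_upt drop_upt)
  have d2: "distinct ([lo..<lo+l] @ [Suc (lo+l)..<lo+p])" by auto
  have s2: "transpose (lo+1) (lo+p) ` {lo+2..<lo+p+1} = {lo+1..<lo+p}"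
  proof (cases "p = 1")
    case True then show ?thesis by simp
  next
    case False
    then have "transpose (lo+1) (lo+p) ` {lo+2..<lo+p+1} = insert (lo+1) ({lo+2..<lo+p+1} - {lo+p})"
      using assms by (intro transpose_image_out) auto
    also have "\<dots> = {lo+1..<lo+p}" using False assms by auto
    finally show ?thesis .
  qed
  have s1: "transpose lo (lo+l) ` {lo+1..<lo+p} = {lo..<lo+l} \<union> {Suc (lo+l)..<lo+p}"
  proof (cases "l = 0")
    case True then show ?thesis by auto
  next
    case False
    then have "transpose lo (lo+l) ` {lo+1..<lo+p} = insert lo ({lo+1..<lo+p} - {lo+l})"
      using assms by (intro transpose_image_out) auto
    also have "\<dots> = {lo..<lo+l} \<union> {Suc (lo+l)..<lo+p}" using False assms by auto
    finally show ?thesis .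
  qed
  have s: "set (map (transpose lo (lo+l) \<circ> transpose (lo+1) (lo+p)) [lo+2..<lo+p+1]) = set ([lo..<lo+l] @ [Suc (lo+l)..<lo+p])"
    by (simp only: set_map set_upt image_comp[symmetric] s2 s1 set_append)
  show ?thesis unfolding e by (rule set_eq_iff_mset_eq_distinct[THEN iffD1, OF d1 d2 s])
qed

lemma ids_valid: "set ids \<subseteq> {1..n} \<Longrightarrow> \<sigma> permutes {..<length ids} \<Longrightarrow> s < length ids \<Longrightarrow> ids ! \<sigma> s \<in> {1..n}"
  by (meson lessThan_iff nth_mem permutes_in_image subsetD)

lemma Ew_fix:
  assumes "\<And>s. s < 2 * a \<Longrightarrow> \<tau> s = s"
  shows "Ew eta ids (\<sigma> \<circ> \<tau>) a = Ew eta ids \<sigma> a"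
  unfolding Ew_def using assms by (intro prod.cong) auto

lemma SS_reindex:
  assumes "\<tau> permutes {..<length ids}" "\<And>s. s < 2 * a \<Longrightarrow> \<tau> s = s"
  shows "(\<Sum>\<sigma>\<in>{\<sigma>. \<sigma> permutes {..<length ids}}. fscale (Ew eta ids \<sigma> a) (Wd n eta ids (\<sigma> \<circ> \<tau>) a p q))
       = SS n eta ids a p q"
proof -
  have "SS n eta ids a p q = (\<Sum>\<sigma>\<in>{\<sigma>. \<sigma> permutes {..<length ids}}. fscale (Ew eta ids (\<sigma> \<circ> \<tau>) a) (Wd n eta ids (\<sigma> \<circ> \<tau>) a p q))"
    unfolding SS_def by (rule sum_permutations_compose_right[OF assms(1)])
  then show ?thesis by (simp add: Ew_fix[OF assms(2)])
qed


lemma sum_const_fs: "(\<Sum>l<p. (f::fa)) = fscale (of_nat p) f"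
  by (induction p) (simp_all add: fscale_add_left fscale_def fun_eq_iff algebra_simps)

lemma main0:
  assumes ids: "set ids \<subseteq> {1..n}" and le: "2 * a + p \<le> length ids"
  shows "Weq n eta (adX n (SS n eta ids a p 0)) (fscale (cX * of_nat p) (SS n eta ids a (p - 1) 1))"
proof -
  let ?m = "length ids"
  let ?P = "{\<sigma>. \<sigma> permutes {..<?m}}"
  define A where "A \<sigma> = map (\<lambda>s. ids ! \<sigma> s) [2*a..<2*a+p]" for \<sigma>
  define D where "D \<sigma> = fprod (map (dup n eta) (map (\<lambda>s. ids ! \<sigma> s) [2*a+p..<?m]))" for \<sigma>
  define \<tau> where "\<tau> l = transpose (2*a+l) (2*a+p-1)" for l
  have Wsplit: "Wd n eta ids \<sigma> a p 0 = fmul (fprod (map (\<lambda>i. mono [GX i]) (A \<sigma>))) (D \<sigma>)" for \<sigma>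
    by (simp add: Wd_def A_def D_def fprod_append o_def)
  have fD: "fs (D \<sigma>)" for \<sigma> by (simp add: D_def)
  have step1: "Weq n eta (adX n (Wd n eta ids \<sigma> a p 0))
      (\<Sum>l<p. fscale cX (fmul (fprod (map (\<lambda>i. mono [GX i]) (take l (A \<sigma>) @ drop (Suc l) (A \<sigma>))))
          (fmul (mono [GG (A \<sigma> ! l)]) (D \<sigma>))))" if \<sigma>: "\<sigma> \<in> ?P" for \<sigma>
  proof -
    have val: "\<And>s. s < ?m \<Longrightarrow> Suc 0 \<le> ids ! \<sigma> s \<and> ids ! \<sigma> s \<le> n"
      using ids_valid[OF ids] \<sigma> by fastforce
    have sA: "set (A \<sigma>) \<subseteq> {1..n}" using le by (auto simp: A_def val)
    have sD: "set (map (\<lambda>s. ids ! \<sigma> s) [2*a+p..<?m]) \<subseteq> {1..n}" by (auto simp: val)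
    have "Weq n eta (adX n (Wd n eta ids \<sigma> a p 0))
      ((\<Sum>l<length (A \<sigma>). fscale cX (fmul (fprod (map (\<lambda>i. mono [GX i]) (take l (A \<sigma>) @ drop (Suc l) (A \<sigma>))))
          (fmul (mono [GG (A \<sigma> ! l)]) (D \<sigma>)))) + fmul (fprod (map (\<lambda>i. mono [GX i]) (A \<sigma>))) (adX n (D \<sigma>)))"
      unfolding Wsplit by (rule adX_xblock[OF sA fD])
    also have "Weq n eta \<dots> ((\<Sum>l<length (A \<sigma>). fscale cX (fmul (fprod (map (\<lambda>i. mono [GX i]) (take l (A \<sigma>) @ drop (Suc l) (A \<sigma>))))
          (fmul (mono [GG (A \<sigma> ! l)]) (D \<sigma>)))) + fmul (fprod (map (\<lambda>i. mono [GX i]) (A \<sigma>))) 0)"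
      by (rule Weq_add[OF Weq_refl], rule Weq_mul_left, simp, unfold D_def, rule adX_dblock[OF sD])
    finally show ?thesis by (simp only: fmul_zero_right add_0_right) (simp add: A_def)
  qed
  have step2: "Weq n eta (fmul (fprod (map (\<lambda>i. mono [GX i]) (take l (A \<sigma>) @ drop (Suc l) (A \<sigma>))))
          (fmul (mono [GG (A \<sigma> ! l)]) (D \<sigma>))) (Wd n eta ids (\<sigma> \<circ> \<tau> l) a (p - 1) 1)"
    if \<sigma>: "\<sigma> \<in> ?P" and l: "l < p" for \<sigma> l
  proof -
    have e1: "Wd n eta ids (\<sigma> \<circ> \<tau> l) a (p - 1) 1 = fmul (fprod (map (\<lambda>i. mono [GX i]) (map (\<lambda>s. ids ! \<sigma> (\<tau> l s)) [2*a..<2*a+p-1])))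
       (fmul (mono [GG (A \<sigma> ! l)]) (D \<sigma>))"
    proof -
      have r1: "[2*a+p-1..<2*a+p] = [2*a+p-1]" using l by (simp add: upt_rec)
      have r2: "2*a+(p-1)+1 = 2*a+p" "2*a+(p-1) = 2*a+p-1" "2*a+p-1+1 = 2*a+p" using l by auto
      have r3: "map (\<lambda>s. dup n eta (ids ! \<sigma> (\<tau> l s))) [2*a+p..<?m] = map (\<lambda>s. dup n eta (ids ! \<sigma> s)) [2*a+p..<?m]"
        using l by (intro map_cong) (auto simp: \<tau>_def transpose_def)
      have r4: "\<tau> l (2*a+p-1) = 2*a+l" by (simp add: \<tau>_def)
      have "Wd n eta ids (\<sigma> \<circ> \<tau> l) a (p - 1) 1 = fprod (map (\<lambda>s. mono [GX (ids ! \<sigma> (\<tau> l s))]) [2*a..<2*a+p-1]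
          @ [mono [GG (ids ! \<sigma> (\<tau> l (2*a+p-1)))]] @ map (\<lambda>s. dup n eta (ids ! \<sigma> (\<tau> l s))) [2*a+p..<?m])"
        unfolding Wd_def r2 r1 by (simp only: o_apply list.map)
      also have "\<dots> = fmul (fprod (map (\<lambda>s. mono [GX (ids ! \<sigma> (\<tau> l s))]) [2*a..<2*a+p-1]))
          (fmul (mono [GG (A \<sigma> ! l)]) (D \<sigma>))"
        unfolding r3 r4 fprod_append D_def A_def map_map o_def using l by simp
      finally show ?thesis by (simp only: map_map o_def)
    qed
    have sB: "set (map (\<lambda>s. ids ! \<sigma> (\<tau> l s)) [2*a..<2*a+p-1]) \<subseteq> {1..n}"
    proof -
      have "\<tau> l permutes {..<?m}" unfolding \<tau>_def using l le by (intro permutes_swap_id) auto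
      then have "\<sigma> \<circ> \<tau> l permutes {..<?m}" using \<sigma> by (simp add: permutes_compose)
      then have val: "\<And>s. s < ?m \<Longrightarrow> Suc 0 \<le> ids ! \<sigma> (\<tau> l s) \<and> ids ! \<sigma> (\<tau> l s) \<le> n"
        using ids_valid[OF ids] by fastforce
      show ?thesis using le by (auto simp: val)
    qed
    have ms: "mset (map (\<lambda>s. ids ! \<sigma> (\<tau> l s)) [2*a..<2*a+p-1]) = mset (take l (A \<sigma>) @ drop (Suc l) (A \<sigma>))"
    proof -
      have "mset (take l (A \<sigma>) @ drop (Suc l) (A \<sigma>)) = image_mset (\<lambda>s. ids ! \<sigma> s) (mset (take l [2*a..<2*a+p] @ drop (Suc l) [2*a..<2*a+p]))"
        by (simp only: A_def take_map drop_map map_append[symmetric] mset_map)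
      also have "\<dots> = image_mset (\<lambda>s. ids ! \<sigma> s) (mset (map (\<tau> l) [2*a..<2*a+p-1]))"
        unfolding \<tau>_def by (subst R1[OF l]) simp
      also have "\<dots> = mset (map (\<lambda>s. ids ! \<sigma> s) (map (\<tau> l) [2*a..<2*a+p-1]))"
        by (simp only: mset_map)
      also have "map (\<lambda>s. ids ! \<sigma> s) (map (\<tau> l) [2*a..<2*a+p-1]) = map (\<lambda>s. ids ! \<sigma> (\<tau> l s)) [2*a..<2*a+p-1]"
        by simp
      finally show ?thesis by simp
    qed
    have sT: "set (take l (A \<sigma>) @ drop (Suc l) (A \<sigma>)) \<subseteq> {1..n}"
      using sB ms by (metis set_mset_mset)
    have fGD: "fs (fmul (mono [GG (A \<sigma> ! l)]) (D \<sigma>))" by (simp add: D_def)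
    have xm: "Weq n eta (fprod (map (\<lambda>i. mono [GX i]) (take l (A \<sigma>) @ drop (Suc l) (A \<sigma>))))
        (fprod (map (\<lambda>i. mono [GX i]) (map (\<lambda>s. ids ! \<sigma> (\<tau> l s)) [2*a..<2*a+p-1])))"
      by (rule xx_mset[OF sT ms[symmetric]])
    show ?thesis unfolding e1 by (rule Weq_mul_right[OF fGD xm])
  qed
  have tauP: "\<tau> l permutes {..<?m}" "\<And>s. s < 2 * a \<Longrightarrow> \<tau> l s = s" if "l < p" for l
    using that le by (auto simp: \<tau>_def intro!: permutes_swap_id)
  have "adX n (SS n eta ids a p 0) = (\<Sum>\<sigma>\<in>?P. fscale (Ew eta ids \<sigma> a) (adX n (Wd n eta ids \<sigma> a p 0)))"
    by (simp add: SS_def adX_sum adX_scale)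
  also have "Weq n eta \<dots> (\<Sum>\<sigma>\<in>?P. fscale (Ew eta ids \<sigma> a) (\<Sum>l<p. fscale cX (Wd n eta ids (\<sigma> \<circ> \<tau> l) a (p - 1) 1)))"
  proof (rule Weq_sum, rule Weq_scale)
    fix \<sigma> assume \<sigma>: "\<sigma> \<in> ?P"
    show "Weq n eta (adX n (Wd n eta ids \<sigma> a p 0)) (\<Sum>l<p. fscale cX (Wd n eta ids (\<sigma> \<circ> \<tau> l) a (p - 1) 1))"
      by (rule Weq_trans[OF step1[OF \<sigma>]], rule Weq_sum, rule Weq_scale, rule step2[OF \<sigma>]) simp
  qed
  also have "(\<Sum>\<sigma>\<in>?P. fscale (Ew eta ids \<sigma> a) (\<Sum>l<p. fscale cX (Wd n eta ids (\<sigma> \<circ> \<tau> l) a (p - 1) 1)))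
     = fscale cX (\<Sum>l<p. \<Sum>\<sigma>\<in>?P. fscale (Ew eta ids \<sigma> a) (Wd n eta ids (\<sigma> \<circ> \<tau> l) a (p - 1) 1))"
    by (simp add: fscale_sum mult.commute sum.swap[where A="?P"])
  also have "\<dots> = fscale cX (\<Sum>l<p. SS n eta ids a (p - 1) 1)"
    by (rule arg_cong[where f="fscale cX"], rule sum.cong[OF refl], rule SS_reindex[OF tauP]) auto
  also have "\<dots> = fscale (cX * of_nat p) (SS n eta ids a (p - 1) 1)"
    by (simp only: sum_const_fs fscale_fscale)
  finally show ?thesis .
qed


lemma main1:
  assumes ids: "set ids \<subseteq> {1..n}" and le: "2 * a + p + 1 \<le> length ids"
    and sym: "\<forall>i\<in>{1..n}. \<forall>j\<in>{1..n}. eta i j = eta j i"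
  shows "Weq n eta (adX n (SS n eta ids a p 1))
     (fscale (2 * cX) (SS n eta ids a p 0) + fscale (cX * of_nat p) (SS n eta ids (a + 1) (p - 1) 0))"
proof -
  let ?m = "length ids"
  let ?P = "{\<sigma>. \<sigma> permutes {..<?m}}"
  let ?G = "2 * a + p"
  define A where "A \<sigma> = map (\<lambda>s. ids ! \<sigma> s) [2*a..<2*a+p]" for \<sigma>
  define g where "g \<sigma> = ids ! \<sigma> (2*a+p)" for \<sigma>
  define D where "D \<sigma> = fprod (map (dup n eta) (map (\<lambda>s. ids ! \<sigma> s) [2*a+p+1..<?m]))" for \<sigma>
  define B where "B \<sigma> l = fmul (fprod (map (\<lambda>i. mono [GX i]) (take l (A \<sigma>) @ drop (Suc l) (A \<sigma>))))
      (fmul (mono [GG (A \<sigma> ! l)]) (fmul (mono [GG (g \<sigma>)]) (D \<sigma>)))" for \<sigma> l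
  define Q where "Q \<sigma> l = fmul (fprod (map (\<lambda>i. mono [GX i]) (take l (A \<sigma>) @ drop (Suc l) (A \<sigma>)))) (D \<sigma>)" for \<sigma> l
  define sw where "sw l = transpose (2*a+l) (2*a+p)" for l
  define \<tau> where "\<tau> l = transpose (2*a) (2*a+l) \<circ> transpose (2*a+1) (2*a+p)" for l
  have fD: "fs (D \<sigma>)" for \<sigma> by (simp add: D_def)
  have valP: "\<And>s. s < ?m \<Longrightarrow> Suc 0 \<le> ids ! \<sigma> s \<and> ids ! \<sigma> s \<le> n" if "\<sigma> \<in> ?P" for \<sigma>
    using ids_valid[OF ids] that by fastforce
  have up1: "[2*a+p..<2*a+p+1] = [2*a+p]" by simp
  have up2: "[2*a+p..<?m] = (2*a+p) # [2*a+p+1..<?m]" using le by (simp add: upt_conv_Cons)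
  have Wsplit1: "Wd n eta ids \<sigma> a p 1 = fmul (fprod (map (\<lambda>i. mono [GX i]) (A \<sigma>))) (fmul (mono [GG (g \<sigma>)]) (D \<sigma>))" for \<sigma>
    unfolding Wd_def up1 by (simp add: A_def D_def g_def fprod_append o_def)
  have Wsplit0: "Wd n eta ids \<sigma> a p 0 = fmul (fprod (map (\<lambda>i. mono [GX i]) (A \<sigma>))) (fmul (dup n eta (g \<sigma>)) (D \<sigma>))" for \<sigma>
    unfolding Wd_def by (simp add: up2 A_def D_def g_def fprod_append o_def)
  have step1: "Weq n eta (adX n (Wd n eta ids \<sigma> a p 1))
      ((\<Sum>l<p. fscale cX (B \<sigma> l)) + fscale (2 * cX) (Wd n eta ids \<sigma> a p 0))" if \<sigma>: "\<sigma> \<in> ?P" for \<sigma>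
  proof -
    have sA: "set (A \<sigma>) \<subseteq> {1..n}" using le by (auto simp: A_def valP[OF \<sigma>])
    have sD: "set (map (\<lambda>s. ids ! \<sigma> s) [2*a+p+1..<?m]) \<subseteq> {1..n}" by (auto simp: valP[OF \<sigma>])
    have sg: "g \<sigma> \<in> {1..n}" using le by (auto simp: g_def valP[OF \<sigma>])
    have fgD: "fs (fmul (mono [GG (g \<sigma>)]) (D \<sigma>))" by (simp add: D_def)
    have "Weq n eta (adX n (Wd n eta ids \<sigma> a p 1))
      ((\<Sum>l<length (A \<sigma>). fscale cX (fmul (fprod (map (\<lambda>i. mono [GX i]) (take l (A \<sigma>) @ drop (Suc l) (A \<sigma>))))
          (fmul (mono [GG (A \<sigma> ! l)]) (fmul (mono [GG (g \<sigma>)]) (D \<sigma>))))) + fmul (fprod (map (\<lambda>i. mono [GX i]) (A \<sigma>))) (adX n (fmul (mono [GG (g \<sigma>)]) (D \<sigma>))))"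
      unfolding Wsplit1 by (rule adX_xblock[OF sA fgD])
    also have "Weq n eta \<dots> ((\<Sum>l<length (A \<sigma>). fscale cX (fmul (fprod (map (\<lambda>i. mono [GX i]) (take l (A \<sigma>) @ drop (Suc l) (A \<sigma>))))
          (fmul (mono [GG (A \<sigma> ! l)]) (fmul (mono [GG (g \<sigma>)]) (D \<sigma>))))) + fmul (fprod (map (\<lambda>i. mono [GX i]) (A \<sigma>))) (fscale (2 * cX) (fmul (dup n eta (g \<sigma>)) (D \<sigma>))))"
      by (rule Weq_add[OF Weq_refl], rule Weq_mul_left, simp, unfold D_def, rule adX_g_dblock[OF sg sD sym])
    also have "\<dots> = (\<Sum>l<p. fscale cX (B \<sigma> l)) + fscale (2 * cX) (Wd n eta ids \<sigma> a p 0)"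
      unfolding Wsplit0 B_def by (simp add: fmul_scale_right A_def)
    finally show ?thesis .
  qed
  have step2: "B (\<sigma> \<circ> sw l) l = fmul (fprod (map (\<lambda>i. mono [GX i]) (take l (A \<sigma>) @ drop (Suc l) (A \<sigma>))))
      (fmul (mono [GG (g \<sigma>)]) (fmul (mono [GG (A \<sigma> ! l)]) (D \<sigma>)))" if l: "l < p" for \<sigma> l
  proof -
    have t1: "take l (A (\<sigma> \<circ> sw l)) = take l (A \<sigma>)"
      unfolding A_def take_map using l by (intro map_cong) (auto simp: sw_def take_upt)
    have t2: "drop (Suc l) (A (\<sigma> \<circ> sw l)) = drop (Suc l) (A \<sigma>)"
      unfolding A_def drop_map using l by (intro map_cong) (auto simp: sw_def drop_upt)
    have t3: "A (\<sigma> \<circ> sw l) ! l = g \<sigma>" using l by (simp add: A_def g_def sw_def)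
    have t4: "g (\<sigma> \<circ> sw l) = A \<sigma> ! l" using l by (simp add: A_def g_def sw_def)
    have t5: "D (\<sigma> \<circ> sw l) = D \<sigma>"
      unfolding D_def using l by (intro arg_cong[where f=fprod] map_cong) (auto simp: sw_def)
    show ?thesis unfolding B_def t1 t2 t3 t4 t5 ..
  qed
  have Al: "A \<sigma> ! l = ids ! \<sigma> (2*a+l)" if "l < p" for \<sigma> l
    using that by (simp add: A_def)
  have step3: "Weq n eta (B \<sigma> l + B (\<sigma> \<circ> sw l) l) (fscale (2 * eta (A \<sigma> ! l) (g \<sigma>)) (Q \<sigma> l))"
    if \<sigma>: "\<sigma> \<in> ?P" and l: "l < p" for \<sigma> l
  proof -
    have x: "A \<sigma> ! l \<in> {1..n}" using l le by (auto simp: Al[OF l] valP[OF \<sigma>])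
    have y: "g \<sigma> \<in> {1..n}" using le by (auto simp: g_def valP[OF \<sigma>])
    show ?thesis unfolding step2[OF l] unfolding B_def Q_def
      by (rule gg_anti_ctx[OF x y]) (simp_all add: D_def)
  qed
  have tau1: "\<tau> l (2*a) = 2*a+l" "\<tau> l (2*a+1) = 2*a+p" if "l < p" for l
    using that by (auto simp: \<tau>_def transpose_def)
  have tau2: "\<tau> l s = s" if "l < p" "s < 2*a \<or> 2*a+p < s" for l s
    using that by (auto simp: \<tau>_def transpose_def)
  have tauP: "\<tau> l permutes {..<?m}" if "l < p" for l
    unfolding \<tau>_def using that le by (intro permutes_compose permutes_swap_id) auto
  have swP: "sw l permutes {..<?m}" "\<And>s. s < 2 * a \<Longrightarrow> sw l s = s" if "l < p" for l
    unfolding sw_def using that le by (auto intro!: permutes_swap_id)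
  have step4: "Weq n eta (fscale (Ew eta ids \<sigma> a * eta (A \<sigma> ! l) (g \<sigma>)) (Q \<sigma> l))
      (fscale (Ew eta ids (\<sigma> \<circ> \<tau> l) (a + 1)) (Wd n eta ids (\<sigma> \<circ> \<tau> l) (a + 1) (p - 1) 0))"
    if \<sigma>: "\<sigma> \<in> ?P" and l: "l < p" for \<sigma> l
  proof -
    have eE: "Ew eta ids (\<sigma> \<circ> \<tau> l) (a + 1) = Ew eta ids \<sigma> a * eta (A \<sigma> ! l) (g \<sigma>)"
    proof -
      have "Ew eta ids (\<sigma> \<circ> \<tau> l) (a + 1) = Ew eta ids (\<sigma> \<circ> \<tau> l) a * eta (ids ! \<sigma> (\<tau> l (2*a))) (ids ! \<sigma> (\<tau> l (2*a+1)))"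
        by (simp add: Ew_def)
      also have "Ew eta ids (\<sigma> \<circ> \<tau> l) a = Ew eta ids \<sigma> a"
        by (rule Ew_fix) (simp add: tau2[OF l])
      moreover have "\<tau> l (Suc (2*a)) = 2*a+p" using tau1(2)[OF l] by simp
      ultimately show ?thesis by (simp add: tau1[OF l] Al[OF l] g_def o_def)
    qed
    have r1: "2*(a+1) = 2*a+2" "2*a+2+(p-1) = 2*a+p+1" using l by auto
    have r2: "map (\<lambda>s. dup n eta (ids ! \<sigma> (\<tau> l s))) [2*a+p+1..<?m] = map (\<lambda>s. dup n eta (ids ! \<sigma> s)) [2*a+p+1..<?m]"
      by (intro map_cong) (auto simp: tau2[OF l])
    have eW: "Wd n eta ids (\<sigma> \<circ> \<tau> l) (a + 1) (p - 1) 0 =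
       fmul (fprod (map (\<lambda>i. mono [GX i]) (map (\<lambda>s. ids ! \<sigma> (\<tau> l s)) [2*a+2..<2*a+p+1]))) (D \<sigma>)"
    proof -
      have e0: "[2*a+p+1..<2*a+p+1] = []" by simp
      show ?thesis unfolding Wd_def add_0_right r1 e0 list.map append_Nil fprod_append o_apply D_def map_map
        by (simp only: o_def r2 fprod.simps fmul_one_left)
    qed
    have ms: "mset (map (\<lambda>s. ids ! \<sigma> (\<tau> l s)) [2*a+2..<2*a+p+1]) = mset (take l (A \<sigma>) @ drop (Suc l) (A \<sigma>))"
    proof -
      have "mset (take l (A \<sigma>) @ drop (Suc l) (A \<sigma>)) = image_mset (\<lambda>s. ids ! \<sigma> s) (mset (take l [2*a..<2*a+p] @ drop (Suc l) [2*a..<2*a+p]))"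
        by (simp only: A_def take_map drop_map map_append[symmetric] mset_map)
      also have "\<dots> = image_mset (\<lambda>s. ids ! \<sigma> s) (mset (map (\<tau> l) [2*a+2..<2*a+p+1]))"
        unfolding \<tau>_def by (subst R2[OF l, symmetric]) simp
      also have "\<dots> = mset (map (\<lambda>s. ids ! \<sigma> s) (map (\<tau> l) [2*a+2..<2*a+p+1]))"
        by (simp only: mset_map)
      also have "map (\<lambda>s. ids ! \<sigma> s) (map (\<tau> l) [2*a+2..<2*a+p+1]) = map (\<lambda>s. ids ! \<sigma> (\<tau> l s)) [2*a+2..<2*a+p+1]"
        by simp
      finally show ?thesis by simp
    qed
    have sA: "set (A \<sigma>) \<subseteq> {1..n}" using le by (auto simp: A_def valP[OF \<sigma>])
    have sT: "set (take l (A \<sigma>) @ drop (Suc l) (A \<sigma>)) \<subseteq> {1..n}"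
    proof -
      have "set (take l (A \<sigma>) @ drop (Suc l) (A \<sigma>)) \<subseteq> set (A \<sigma>)" by (auto dest: in_set_takeD in_set_dropD)
      then show ?thesis using sA by (rule subset_trans)
    qed
    have xm: "Weq n eta (fprod (map (\<lambda>i. mono [GX i]) (take l (A \<sigma>) @ drop (Suc l) (A \<sigma>))))
        (fprod (map (\<lambda>i. mono [GX i]) (map (\<lambda>s. ids ! \<sigma> (\<tau> l s)) [2*a+2..<2*a+p+1])))"
      by (rule xx_mset[OF sT ms[symmetric]])
    show ?thesis unfolding eE eW Q_def
      by (rule Weq_scale, rule Weq_mul_right[OF fD xm])
  qed
  have half: "Weq n eta (\<Sum>\<sigma>\<in>?P. fscale (Ew eta ids \<sigma> a) (B \<sigma> l)) (SS n eta ids (a + 1) (p - 1) 0)"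
    if l: "l < p" for l
  proof -
    have re: "(\<Sum>\<sigma>\<in>?P. fscale (Ew eta ids \<sigma> a) (B (\<sigma> \<circ> sw l) l)) = (\<Sum>\<sigma>\<in>?P. fscale (Ew eta ids \<sigma> a) (B \<sigma> l))"
    proof -
      have "(\<Sum>\<sigma>\<in>?P. fscale (Ew eta ids \<sigma> a) (B \<sigma> l)) = (\<Sum>\<sigma>\<in>?P. fscale (Ew eta ids (\<sigma> \<circ> sw l) a) (B (\<sigma> \<circ> sw l) l))"
        by (rule sum_permutations_compose_right[OF swP(1)[OF l]])
      also have "\<dots> = (\<Sum>\<sigma>\<in>?P. fscale (Ew eta ids \<sigma> a) (B (\<sigma> \<circ> sw l) l))"
        by (simp add: Ew_fix[OF swP(2)[OF l]])
      finally show ?thesis by simp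
    qed
    have "(\<Sum>\<sigma>\<in>?P. fscale (Ew eta ids \<sigma> a) (B \<sigma> l))
        = fscale (1/2) (\<Sum>\<sigma>\<in>?P. fscale (Ew eta ids \<sigma> a) (B \<sigma> l + B (\<sigma> \<circ> sw l) l))"
    proof -
      have "(\<Sum>\<sigma>\<in>?P. fscale (Ew eta ids \<sigma> a) (B \<sigma> l + B (\<sigma> \<circ> sw l) l))
          = (\<Sum>\<sigma>\<in>?P. fscale (Ew eta ids \<sigma> a) (B \<sigma> l)) + (\<Sum>\<sigma>\<in>?P. fscale (Ew eta ids \<sigma> a) (B \<sigma> l))"
        by (simp only: fscale_add sum.distrib re)
      also have "\<dots> = fscale 2 (\<Sum>\<sigma>\<in>?P. fscale (Ew eta ids \<sigma> a) (B \<sigma> l))"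
        by (simp add: fscale_def fun_eq_iff)
      finally show ?thesis by simp
    qed
    also have "Weq n eta \<dots> (fscale (1/2) (\<Sum>\<sigma>\<in>?P. fscale (Ew eta ids \<sigma> a) (fscale (2 * eta (A \<sigma> ! l) (g \<sigma>)) (Q \<sigma> l))))"
      by (rule Weq_scale, rule Weq_sum, rule Weq_scale, rule step3[OF _ l]) simp
    also have "\<dots> = (\<Sum>\<sigma>\<in>?P. fscale (Ew eta ids \<sigma> a * eta (A \<sigma> ! l) (g \<sigma>)) (Q \<sigma> l))"
      by (simp add: fscale_sum mult.commute mult.left_commute)
    also have "Weq n eta \<dots> (\<Sum>\<sigma>\<in>?P. fscale (Ew eta ids (\<sigma> \<circ> \<tau> l) (a + 1)) (Wd n eta ids (\<sigma> \<circ> \<tau> l) (a + 1) (p - 1) 0))"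
      by (rule Weq_sum, rule step4[OF _ l]) simp
    also have "\<dots> = SS n eta ids (a + 1) (p - 1) 0"
      unfolding SS_def by (rule sum_permutations_compose_right[OF tauP[OF l], symmetric])
    finally show ?thesis .
  qed
  have "adX n (SS n eta ids a p 1) = (\<Sum>\<sigma>\<in>?P. fscale (Ew eta ids \<sigma> a) (adX n (Wd n eta ids \<sigma> a p 1)))"
    by (simp add: SS_def adX_sum adX_scale)
  also have "Weq n eta \<dots> (\<Sum>\<sigma>\<in>?P. fscale (Ew eta ids \<sigma> a) ((\<Sum>l<p. fscale cX (B \<sigma> l)) + fscale (2 * cX) (Wd n eta ids \<sigma> a p 0)))"
    by (rule Weq_sum, rule Weq_scale, rule step1) simp
  also have "\<dots> = fscale cX (\<Sum>l<p. \<Sum>\<sigma>\<in>?P. fscale (Ew eta ids \<sigma> a) (B \<sigma> l)) + fscale (2 * cX) (SS n eta ids a p 0)"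
    by (simp add: SS_def fscale_add fscale_sum sum.distrib mult.commute sum.swap[where A="?P"])
  also have "Weq n eta \<dots> (fscale cX (\<Sum>l<p. SS n eta ids (a + 1) (p - 1) 0) + fscale (2 * cX) (SS n eta ids a p 0))"
    by (rule Weq_add[OF _ Weq_refl], rule Weq_scale, rule Weq_sum, rule half) simp
  also have "\<dots> = fscale (2 * cX) (SS n eta ids a p 0) + fscale (cX * of_nat p) (SS n eta ids (a + 1) (p - 1) 0)"
    by (simp only: sum_const_fs fscale_fscale add.commute)
  finally show ?thesis .
qed


lemma cX_sq: "cX * cX = - 1 / 2"
proof -
  have "complex_of_real (sqrt 2) * complex_of_real (sqrt 2) = complex_of_real (sqrt 2 * sqrt 2)"
    by (simp only: of_real_mult)
  also have "sqrt 2 * sqrt 2 = (2::real)" by simp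
  finally have "complex_of_real (sqrt 2) * complex_of_real (sqrt 2) = 2" by simp
  then have "cX * cX = (\<i> * \<i>) / (complex_of_real (sqrt 2) * complex_of_real (sqrt 2))"
    unfolding cX_def by (simp only: times_divide_times_eq)
  also have "\<dots> = (\<i> * \<i>) / 2" by (simp only: \<open>complex_of_real (sqrt 2) * complex_of_real (sqrt 2) = 2\<close>)
  also have "\<dots> = - 1 / 2" by simp
  finally show ?thesis .
qed

lemma nz_suc: "1 + complex_of_nat q \<noteq> 0"
proof -
  have "1 + complex_of_nat q = of_nat (Suc q)" by simp
  moreover have "(of_nat (Suc q) :: complex) \<noteq> 0" by (simp only: of_nat_eq_0_iff)
  ultimately show ?thesis by simp
qed

lemma LB0:
  assumes ids: "set ids \<subseteq> {1..n}" and le: "2 * int a + p \<le> int (length ids)"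
  shows "Weq n eta (adX n (bracket n eta a p 0 t ids)) (fscale cX (bracket n eta a (p - 1) 1 t ids))"
proof (cases "p < 0")
  case True then show ?thesis by (simp add: bracket_neg)
next
  case False
  then have "0 \<le> p" by simp
  then obtain q where q: "p = int q" using zero_le_imp_eq_int by blast
  have le': "2 * a + q \<le> length ids" using le q by simp
  have "adX n (bracket n eta a p 0 t ids) = fscale (1 / (2 ^ a * fact a * fact q * fact t)) (adX n (SS n eta ids a q 0))"
    by (simp add: q bracket_SS adX_scale)
  also have "Weq n eta \<dots> (fscale (1 / (2 ^ a * fact a * fact q * fact t)) (fscale (cX * of_nat q) (SS n eta ids a (q - 1) 1)))"
    by (rule Weq_scale, rule main0[OF ids le'])
  also have "\<dots> = fscale cX (bracket n eta a (p - 1) 1 t ids)"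
  proof (cases q)
    case 0 then show ?thesis by (simp add: q bracket_neg)
  next
    case (Suc q')
    have pm: "p - 1 = int q'" using q Suc by simp
    have "(1 / (2 ^ a * fact a * fact q * fact t)) * (cX * of_nat q) = cX * (1 / (2 ^ a * fact a * fact q' * fact t) :: complex)"
      using Suc by (simp add: fact_Suc divide_simps nz_suc)
    then show ?thesis by (simp add: pm bracket_SS Suc)
  qed
  finally show ?thesis .
qed

lemma LB1:
  assumes ids: "set ids \<subseteq> {1..n}" and le: "2 * int a + p + 1 \<le> int (length ids)"
    and sym: "\<forall>i\<in>{1..n}. \<forall>j\<in>{1..n}. eta i j = eta j i"
  shows "Weq n eta (adX n (bracket n eta a p 1 t ids))
     (fscale (2 * cX * of_nat (t + 1)) (bracket n eta a p 0 (t + 1) ids)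
      + fscale (2 * cX * of_nat (a + 1)) (bracket n eta (a + 1) (p - 1) 0 t ids))"
proof (cases "p < 0")
  case True then show ?thesis by (simp add: bracket_neg)
next
  case False
  then have "0 \<le> p" by simp
  then obtain q where q: "p = int q" using zero_le_imp_eq_int by blast
  have le': "2 * a + q + 1 \<le> length ids" using le q by simp
  let ?N = "1 / (2 ^ a * fact a * fact q * fact t) :: complex"
  have "adX n (bracket n eta a p 1 t ids) = fscale ?N (adX n (SS n eta ids a q 1))"
    by (simp add: q bracket_SS adX_scale)
  also have "Weq n eta \<dots> (fscale ?N (fscale (2 * cX) (SS n eta ids a q 0) + fscale (cX * of_nat q) (SS n eta ids (a + 1) (q - 1) 0)))"
    by (rule Weq_scale, rule main1[OF ids le' sym])
  also have "\<dots> = fscale (2 * cX * of_nat (t + 1)) (bracket n eta a p 0 (t + 1) ids)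
      + fscale (2 * cX * of_nat (a + 1)) (bracket n eta (a + 1) (p - 1) 0 t ids)"
  proof -
    have c1: "?N * (2 * cX) = 2 * cX * of_nat (t + 1) * (1 / (2 ^ a * fact a * fact q * fact (t + 1)))"
      by (simp add: fact_Suc divide_simps nz_suc)
    have c2: "fscale (?N * (cX * of_nat q)) (SS n eta ids (a + 1) (q - 1) 0) = fscale (2 * cX * of_nat (a + 1)) (bracket n eta (a + 1) (p - 1) 0 t ids)"
    proof (cases q)
      case 0 then show ?thesis by (simp add: q bracket_neg)
    next
      case (Suc q')
      have pm: "p - 1 = int q'" using q Suc by simp
      have "?N * (cX * of_nat q) = 2 * cX * of_nat (a + 1) * (1 / (2 ^ (a + 1) * fact (a + 1) * fact q' * fact t))"
        using Suc by (simp add: fact_Suc divide_simps nz_suc)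
      then show ?thesis by (simp add: pm bracket_SS Suc)
    qed
    show ?thesis using c1 c2 by (simp add: fscale_add q bracket_SS)
  qed
  finally show ?thesis .
qed

lemma fprod_xx: "fprod (map (\<lambda>i. mono [GX i]) ids) = mono (map GX ids)"
  by (induction ids) (simp_all add: fmul_mono_mono)

lemma sum_card_fs: "(\<Sum>x\<in>S. (f::fa)) = fscale (of_nat (card S)) f"
proof (induction S rule: infinite_finite_induct)
  case (infinite A)
  then have e: "sum (\<lambda>x. f) A = 0" by simp
  show ?case unfolding e using infinite by simp
next
  case empty then show ?case by simp
next
  case (insert x F)
  then have "(\<Sum>x\<in>insert x F. f) = f + fscale (of_nat (card F)) f" by (simp only: sum.insert[OF insert(1,2)] insert.IH)
  also have "\<dots> = fscale (of_nat (card (insert x F))) f"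
    using insert by (simp add: fscale_def fun_eq_iff algebra_simps)
  finally show ?case .
qed

lemma base:
  assumes ids: "set ids \<subseteq> {1..n}"
  shows "Weq n eta (mono (map GX ids)) (bracket n eta 0 (int (length ids)) 0 0 ids)"
proof -
  let ?m = "length ids"
  let ?P = "{\<sigma>. \<sigma> permutes {..<?m}}"
  have W: "Weq n eta (Wd n eta ids \<sigma> 0 ?m 0) (mono (map GX ids))" if \<sigma>: "\<sigma> \<in> ?P" for \<sigma>
  proof -
    have "Wd n eta ids \<sigma> 0 ?m 0 = fprod (map (\<lambda>i. mono [GX i]) (permute_list \<sigma> ids))"
      by (simp add: Wd_def permute_list_def o_def)
    also have "Weq n eta \<dots> (fprod (map (\<lambda>i. mono [GX i]) ids))"
    proof (rule xx_mset)
      show "mset (permute_list \<sigma> ids) = mset ids" using \<sigma> by simp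
      then show "set (permute_list \<sigma> ids) \<subseteq> {1..n}" using ids by (metis set_mset_mset)
    qed
    finally show ?thesis by (simp add: fprod_xx)
  qed
  have "bracket n eta 0 (int ?m) 0 0 ids = fscale (1 / fact ?m) (\<Sum>\<sigma>\<in>?P. Wd n eta ids \<sigma> 0 ?m 0)"
    by (simp add: bracket_SS SS_def Ew_def)
  also have "Weq n eta \<dots> (fscale (1 / fact ?m) (\<Sum>\<sigma>\<in>?P. mono (map GX ids)))"
    by (rule Weq_scale, rule Weq_sum, rule W) simp
  also have "(\<Sum>\<sigma>\<in>?P. mono (map GX ids)) = fscale (fact ?m) (mono (map GX ids))"
  proof -
    have "card ?P = fact ?m" by (rule card_permutations) simp_all
    moreover have "(\<Sum>\<sigma>\<in>?P. f) = fscale (of_nat (card ?P)) f" for f :: fa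
      by (rule sum_card_fs)
    ultimately show ?thesis by simp
  qed
  also have "fscale (1 / fact ?m) (fscale (fact ?m) (mono (map GX ids))) = mono (map GX ids)"
    by simp
  finally show ?thesis by (rule Weq_sym)
qed


lemma comb_sum:
  fixes b :: "nat \<Rightarrow> fa"
  shows "(\<Sum>t\<le>k. fscale (of_nat (k + 1 - t)) (b t)) + (\<Sum>t\<le>k. fscale (of_nat (t + 1)) (b (Suc t)))
       = (\<Sum>t\<le>Suc k. fscale (of_nat (k + 1)) (b t))"
proof -
  have h0: "(\<Sum>t\<le>Suc k. fscale (of_nat (k + 1)) (b t)) = (\<Sum>t\<le>Suc k. fscale (of_nat (k + 1 - t)) (b t) + fscale (of_nat t) (b t))"
  proof (rule sum.cong[OF refl])
    fix t assume "t \<in> {..Suc k}"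
    then have "of_nat (k + 1) = (of_nat (k + 1 - t) + of_nat t :: complex)" by (simp add: of_nat_diff)
    then show "fscale (of_nat (k + 1)) (b t) = fscale (of_nat (k + 1 - t)) (b t) + fscale (of_nat t) (b t)"
      by (simp add: fscale_add_left)
  qed
  have h1: "(\<Sum>t\<le>Suc k. fscale (of_nat (k + 1 - t)) (b t) + fscale (of_nat t) (b t)) = (\<Sum>t\<le>Suc k. fscale (of_nat (k + 1 - t)) (b t)) + (\<Sum>t\<le>Suc k. fscale (of_nat t) (b t))"
    by (rule sum.distrib)
  have h2: "(\<Sum>t\<le>Suc k. fscale (of_nat (k + 1 - t)) (b t)) = (\<Sum>t\<le>k. fscale (of_nat (k + 1 - t)) (b t))"
    by (simp add: sum.atMost_Suc)
  have h3: "(\<Sum>t\<le>Suc k. fscale (of_nat t) (b t)) = (\<Sum>t\<le>k. fscale (of_nat (t + 1)) (b (Suc t)))"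
    by (simp only: sum.atMost_Suc_shift) (simp del: sum.atMost_Suc)
  show ?thesis by (simp only: h0 h1 h2 h3)
qed

definition RR :: "nat \<Rightarrow> (nat \<Rightarrow> nat \<Rightarrow> complex) \<Rightarrow> nat list \<Rightarrow> nat \<Rightarrow> nat \<Rightarrow> fa" where
  "RR n eta ids k r = fscale ((-1) ^ k * fact k * cX ^ r)
     (\<Sum>t\<in>{0..k}. bracket n eta t (int (length ids) - int k - int t - int r) r (k - t) ids)"

lemma stepAB:
  assumes ids: "set ids \<subseteq> {1..n}"
  shows "Weq n eta (adX n (RR n eta ids k 0)) (RR n eta ids k 1)"
proof -
  let ?m = "length ids"
  have "adX n (RR n eta ids k 0) = fscale ((-1) ^ k * fact k)
      (\<Sum>t\<in>{0..k}. adX n (bracket n eta t (int ?m - int k - int t - int 0) 0 (k - t) ids))"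
    by (simp add: RR_def adX_scale adX_sum)
  also have "Weq n eta \<dots> (fscale ((-1) ^ k * fact k)
      (\<Sum>t\<in>{0..k}. fscale cX (bracket n eta t (int ?m - int k - int t - int 0 - 1) 1 (k - t) ids)))"
  proof (rule Weq_scale, rule Weq_sum, rule LB0[OF ids])
    fix t assume "t \<in> {0..k}"
    then show "2 * int t + (int ?m - int k - int t - int 0) \<le> int ?m" by simp
  qed
  also have "\<dots> = RR n eta ids k 1"
    by (simp add: RR_def fscale_sum algebra_simps)
  finally show ?thesis .
qed

lemma stepBA:
  assumes ids: "set ids \<subseteq> {1..n}" and sym: "\<forall>i\<in>{1..n}. \<forall>j\<in>{1..n}. eta i j = eta j i"
  shows "Weq n eta (adX n (RR n eta ids k 1)) (RR n eta ids (Suc k) 0)"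
proof -
  let ?m = "length ids"
  define b where "b t = bracket n eta t (int ?m - int (Suc k) - int t - int 0) 0 (Suc k - t) ids" for t
  have "adX n (RR n eta ids k 1) = fscale ((-1) ^ k * fact k * cX)
      (\<Sum>t\<in>{0..k}. adX n (bracket n eta t (int ?m - int k - int t - int 1) 1 (k - t) ids))"
    by (simp add: RR_def adX_scale adX_sum)
  also have "Weq n eta \<dots> (fscale ((-1) ^ k * fact k * cX)
      (\<Sum>t\<in>{0..k}. fscale (2 * cX * of_nat (k - t + 1)) (bracket n eta t (int ?m - int k - int t - int 1) 0 (k - t + 1) ids)
         + fscale (2 * cX * of_nat (t + 1)) (bracket n eta (t + 1) (int ?m - int k - int t - int 1 - 1) 0 (k - t) ids)))"
  proof (rule Weq_scale, rule Weq_sum, rule LB1[OF ids _ sym])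
    fix t assume "t \<in> {0..k}"
    then show "2 * int t + (int ?m - int k - int t - int 1) + 1 \<le> int ?m" by simp
  qed
  also have "(\<Sum>t\<in>{0..k}. fscale (2 * cX * of_nat (k - t + 1)) (bracket n eta t (int ?m - int k - int t - int 1) 0 (k - t + 1) ids)
         + fscale (2 * cX * of_nat (t + 1)) (bracket n eta (t + 1) (int ?m - int k - int t - int 1 - 1) 0 (k - t) ids))
      = fscale (2 * cX) ((\<Sum>t\<le>k. fscale (of_nat (k + 1 - t)) (b t)) + (\<Sum>t\<le>k. fscale (of_nat (t + 1)) (b (Suc t))))"
  proof -
    have "\<And>t. t \<in> {..k} \<Longrightarrow> fscale (2 * cX * of_nat (k - t + 1)) (bracket n eta t (int ?m - int k - int t - int 1) 0 (k - t + 1) ids)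
         + fscale (2 * cX * of_nat (t + 1)) (bracket n eta (t + 1) (int ?m - int k - int t - int 1 - 1) 0 (k - t) ids)
       = fscale (2 * cX) (fscale (of_nat (k + 1 - t)) (b t)) + fscale (2 * cX) (fscale (of_nat (t + 1)) (b (Suc t)))"
    proof -
      fix t assume t: "t \<in> {..k}"
      have e1: "k - t + 1 = k + 1 - t" "Suc k - t = k + 1 - t" using t by auto
      have e2: "int ?m - int k - int t - int 1 = int ?m - int (Suc k) - int t - int 0"
        "int ?m - int k - int t - int 1 - 1 = int ?m - int (Suc k) - int (Suc t) - int 0"
        "k - t = Suc k - Suc t" "t + 1 = Suc t" by auto
      show "?thesis t" unfolding b_def e2 e1 using t by (simp add: mult.assoc Suc_diff_le)
    qed
    then show ?thesis
      by (simp add: atLeast0AtMost fscale_add fscale_sum sum.distrib)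
  qed
  also have "\<dots> = fscale (2 * cX) (\<Sum>t\<le>Suc k. fscale (of_nat (k + 1)) (b t))"
    by (simp only: comb_sum)
  also have "fscale ((-1) ^ k * fact k * cX) (fscale (2 * cX) (\<Sum>t\<le>Suc k. fscale (of_nat (k + 1)) (b t)))
     = RR n eta ids (Suc k) 0"
  proof -
    have c: "(-1) ^ k * fact k * cX * (2 * cX) * of_nat (k + 1) = ((-1) ^ Suc k * fact (Suc k) :: complex)"
    proof -
      have "(-1) ^ k * fact k * cX * (2 * cX) * of_nat (k + 1) = (-1) ^ k * fact k * of_nat (k + 1) * (2 * (cX * cX))"
        by (simp only: mult_ac)
      also have "\<dots> = ((-1) ^ Suc k * fact (Suc k) :: complex)"
        by (simp add: cX_sq fact_Suc algebra_simps)
      finally show ?thesis .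
    qed
    have s1: "(\<Sum>t\<le>Suc k. fscale (of_nat (k + 1)) (b t)) = fscale (of_nat (k + 1)) (\<Sum>t\<le>Suc k. b t)"
      by (simp only: fscale_sum)
    have s2: "(\<Sum>t\<le>Suc k. b t) = (\<Sum>t\<in>{0..Suc k}. bracket n eta t (int ?m - int (Suc k) - int t - int 0) 0 (Suc k - t) ids)"
      by (simp only: b_def atLeast0AtMost)
    have "fscale ((-1) ^ k * fact k * cX) (fscale (2 * cX) (\<Sum>t\<le>Suc k. fscale (of_nat (k + 1)) (b t)))
        = fscale ((-1) ^ k * fact k * cX * (2 * cX) * of_nat (k + 1)) (\<Sum>t\<le>Suc k. b t)"
      by (simp only: s1 fscale_fscale mult.assoc)
    also have "\<dots> = RR n eta ids (Suc k) 0"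
      unfolding c s2 RR_def by simp
    finally show ?thesis .
  qed
  finally show ?thesis .
qed

lemma stepAll:
  assumes ids: "set ids \<subseteq> {1..n}" and sym: "\<forall>i\<in>{1..n}. \<forall>j\<in>{1..n}. eta i j = eta j i"
  shows "Weq n eta ((adX n ^^ (2 * k)) (mono (map GX ids))) (RR n eta ids k 0)
       \<and> Weq n eta ((adX n ^^ (2 * k + 1)) (mono (map GX ids))) (RR n eta ids k 1)"
proof (induction k)
  case 0
  have A: "Weq n eta ((adX n ^^ (2 * 0)) (mono (map GX ids))) (RR n eta ids 0 0)"
    using base[OF ids, of eta] by (simp add: RR_def)
  moreover have "Weq n eta ((adX n ^^ (2 * 0 + 1)) (mono (map GX ids))) (RR n eta ids 0 1)"
    using Weq_trans[OF Weq_adX[OF A] stepAB[OF ids]] by simp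
  ultimately show ?case by blast
next
  case (Suc k)
  have A: "Weq n eta ((adX n ^^ (2 * Suc k)) (mono (map GX ids))) (RR n eta ids (Suc k) 0)"
  proof -
    have "(adX n ^^ (2 * Suc k)) (mono (map GX ids)) = adX n ((adX n ^^ (2 * k + 1)) (mono (map GX ids)))"
      by simp
    then show ?thesis using Weq_trans[OF Weq_adX[OF Suc.IH[THEN conjunct2]] stepBA[OF ids sym]] by simp
  qed
  moreover have "Weq n eta ((adX n ^^ (2 * Suc k + 1)) (mono (map GX ids))) (RR n eta ids (Suc k) 1)"
  proof -
    have "(adX n ^^ (2 * Suc k + 1)) (mono (map GX ids)) = adX n ((adX n ^^ (2 * Suc k)) (mono (map GX ids)))"
      by simp
    then show ?thesis using Weq_trans[OF Weq_adX[OF A] stepAB[OF ids]] by simp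
  qed
  ultimately show ?case by blast
qed

theorem lemma5p3:
  fixes n m k r :: nat and eta :: "nat \<Rightarrow> nat \<Rightarrow> complex" and ids :: "nat list"
  assumes "n \<ge> 1"
    and sym: "\<forall>i\<in>{1..n}. \<forall>j\<in>{1..n}. eta i j = eta j i"
    and inv: "\<exists>\<theta> :: nat \<Rightarrow> nat \<Rightarrow> complex. \<forall>i\<in>{1..n}. \<forall>j\<in>{1..n}.
                (\<Sum>l\<in>{1..n}. eta i l * \<theta> l j) = (if i = j then 1 else 0)"
    and "m \<ge> 1" and "length ids = m" and "set ids \<subseteq> {1..n}"
    and "r \<in> {0, 1}"
  shows "Weq n eta ((adX n ^^ (2 * k + r)) (mono (map GX ids)))
           (fscale ((-1) ^ k * fact k * cX ^ r)
              (\<Sum>t\<in>{0..k}. bracket n eta t (int m - int k - int t - int r) r (k - t) ids))"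
proof -
  have ids: "set ids \<subseteq> {1..n}" by fact
  have e: "fscale ((-1) ^ k * fact k * cX ^ r)
              (\<Sum>t\<in>{0..k}. bracket n eta t (int m - int k - int t - int r) r (k - t) ids) = RR n eta ids k r"
    unfolding RR_def using assms(5) by simp
  from assms(7) consider "r = 0" | "r = 1" by blast
  then show ?thesis
  proof cases
    case 1 then show ?thesis unfolding e using stepAll[OF ids sym, of k] by simp
  next
    case 2 then show ?thesis unfolding e using stepAll[OF ids sym, of k] by simp
  qed
qed


end
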